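(* In the setting described in the context, suppose that the closed-loop system $\Sigma_0$ is UGES. Then there exists $\delta^\star>0$ such that the sampled-data system $\Sigma$ is UGES whenever the maximal sampling time $\delta=\sup_{k\ge0}(s_{k+1}-s_k)$ of the sampling sequence is smaller than $\delta^\star$.
   Context: $X,U$ are Banach spaces. $A$ is the infinitesimal generator of a $C_0$-group $(T_t)_{t\in\mathbb{R}}$ of bounded linear operators on $X$. $\mathcal{Q}$ is a nonempty set, $\mathrm{PC}$ the set of piecewise constant $\sigma:\mathbb{R}_+\to\mathcal{Q}$. For $q\in\mathcal{Q}$, $f_q:X\times U\to X$ is Lipschitz with constant $L_f>0$ independent of $q$ and $f_q(0,0)=0$; $K:X\to U$ is globally Lipschitz with $K(0)=0$. Closed-loop system $\Sigma_0$: for $q\in\mathcal{Q}$, $T_q(t)x_0$ is the mild solution $x(t)=T_tx_0+\int_0^tT_{t-s}f_q(x(s),K(x(s)))ds$, and for $\sigma\in\mathrm{PC}$ equal to $q_k$ on $[t_k,t_{k+1})$ ($0=t_0<t_1<\cdots\to\infty$), $\phi^{\Sigma_0}(t,x_0,\sigma)=T_{q_k}(t-t_k)\cdots T_{q_0}(t_1)x_0$ for $t\in[t_k,t_{k+1})$. Sampled-data system $\Sigma$: given sampling instants $s_0=0<s_1<\cdots$ with $s_k\to\infty$, $\phi^\Sigma(t,x_0,\sigma)=x^\Sigma(t)$, where $x^\Sigma$ is the unique continuous function with $x^\Sigma(0)=x_0$ and, for $k\ge0$, $s_k\le t<s_{k+1}$, $x^\Sigma(t)=T_{t-s_k}x^\Sigma(s_k)+\int_0^{t-s_k}T_{t-s_k-s}f_{\sigma(s+s_k)}(x^\Sigma(s+s_k),K(T_sx^\Sigma(s_k)))ds$.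 A system with transition map $\phi$ is UGES if there exist $M,\lambda>0$ with $\|\phi(t,x,\sigma)\|\le Me^{-\lambda t}\|x\|$ for all $t\ge0$, $x\in X$, $\sigma\in\mathrm{PC}$. *)

theory Defs
  imports "HOL-Analysis.Analysis"
begin

text \<open>C0-group of bounded linear operators on a Banach space (its generator A is
  determined by T and plays no further role in the statement).\<close>
definition C0_group :: "(real \<Rightarrow> 'x::banach \<Rightarrow> 'x) \<Rightarrow> bool" where
  "C0_group T \<longleftrightarrow> (\<forall>t. bounded_linear (T t)) \<and> T 0 = id \<and>
     (\<forall>s t. T (s + t) = T s \<circ> T t) \<and> (\<forall>x. ((\<lambda>t. T t x) \<longlongrightarrow> x) (at 0))"

definition switching_seq :: "(real \<Rightarrow> 'q) \<Rightarrow> (nat \<Rightarrow> real) \<Rightarrow> bool" where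
  "switching_seq \<sigma> ts \<longleftrightarrow> ts 0 = 0 \<and> strict_mono ts \<and> filterlim ts at_top sequentially \<and>
     (\<forall>k. \<forall>t\<in>{ts k..<ts (Suc k)}. \<sigma> t = \<sigma> (ts k))"

definition PC :: "(real \<Rightarrow> 'q) set" where
  "PC = {\<sigma>. \<exists>ts. switching_seq \<sigma> ts}"

definition sampling_seq :: "(nat \<Rightarrow> real) \<Rightarrow> bool" where
  "sampling_seq s \<longleftrightarrow> s 0 = 0 \<and> strict_mono s \<and> filterlim s at_top sequentially"

definition mild_sol ::
  "(real \<Rightarrow> 'x::banach \<Rightarrow> 'x) \<Rightarrow> ('q \<Rightarrow> 'x \<times> 'u::banach \<Rightarrow> 'x) \<Rightarrow> ('x \<Rightarrow> 'u)
     \<Rightarrow> 'q \<Rightarrow> 'x \<Rightarrow> (real \<Rightarrow> 'x) \<Rightarrow> bool" where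
  "mild_sol T f K q x0 x \<longleftrightarrow> continuous_on {0..} x \<and>
     (\<forall>t\<ge>0. x t = T t x0 + integral {0..t} (\<lambda>r. T (t - r) (f q (x r, K (x r)))))"

definition Tq ::
  "(real \<Rightarrow> 'x::banach \<Rightarrow> 'x) \<Rightarrow> ('q \<Rightarrow> 'x \<times> 'u::banach \<Rightarrow> 'x) \<Rightarrow> ('x \<Rightarrow> 'u)
     \<Rightarrow> 'q \<Rightarrow> real \<Rightarrow> 'x \<Rightarrow> 'x" where
  "Tq T f K q t x0 = (THE x. mild_sol T f K q x0 x \<and> (\<forall>r<0. x r = 0)) t"

fun sw_state ::
  "(real \<Rightarrow> 'x::banach \<Rightarrow> 'x) \<Rightarrow> ('q \<Rightarrow> 'x \<times> 'u::banach \<Rightarrow> 'x) \<Rightarrow> ('x \<Rightarrow> 'u)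
     \<Rightarrow> (real \<Rightarrow> 'q) \<Rightarrow> (nat \<Rightarrow> real) \<Rightarrow> 'x \<Rightarrow> nat \<Rightarrow> 'x" where
  "sw_state T f K \<sigma> ts x0 0 = x0"
| "sw_state T f K \<sigma> ts x0 (Suc k) =
     Tq T f K (\<sigma> (ts k)) (ts (Suc k) - ts k) (sw_state T f K \<sigma> ts x0 k)"

text \<open>Transition map of \<Sigma>0: T_{q_k}(t - t_k) ... T_{q_0}(t_1) x0 for t \<in> [t_k, t_{k+1}).\<close>
definition phi0 ::
  "(real \<Rightarrow> 'x::banach \<Rightarrow> 'x) \<Rightarrow> ('q \<Rightarrow> 'x \<times> 'u::banach \<Rightarrow> 'x) \<Rightarrow> ('x \<Rightarrow> 'u)
     \<Rightarrow> real \<Rightarrow> 'x \<Rightarrow> (real \<Rightarrow> 'q) \<Rightarrow> 'x" where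
  "phi0 T f K t x0 \<sigma> =
     (let ts = (SOME ts. switching_seq \<sigma> ts);
          k = (THE k. ts k \<le> t \<and> t < ts (Suc k))
      in Tq T f K (\<sigma> (ts k)) (t - ts k) (sw_state T f K \<sigma> ts x0 k))"

definition sd_sol ::
  "(real \<Rightarrow> 'x::banach \<Rightarrow> 'x) \<Rightarrow> ('q \<Rightarrow> 'x \<times> 'u::banach \<Rightarrow> 'x) \<Rightarrow> ('x \<Rightarrow> 'u)
     \<Rightarrow> (nat \<Rightarrow> real) \<Rightarrow> 'x \<Rightarrow> (real \<Rightarrow> 'q) \<Rightarrow> (real \<Rightarrow> 'x) \<Rightarrow> bool" where
  "sd_sol T f K s x0 \<sigma> x \<longleftrightarrow> continuous_on {0..} x \<and> x 0 = x0 \<and>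
     (\<forall>k. \<forall>t\<in>{s k..<s (Suc k)}.
        x t = T (t - s k) (x (s k)) +
              integral {0..t - s k}
                (\<lambda>r. T (t - s k - r) (f (\<sigma> (r + s k)) (x (r + s k), K (T r (x (s k)))))))"

definition phiS ::
  "(real \<Rightarrow> 'x::banach \<Rightarrow> 'x) \<Rightarrow> ('q \<Rightarrow> 'x \<times> 'u::banach \<Rightarrow> 'x) \<Rightarrow> ('x \<Rightarrow> 'u)
     \<Rightarrow> (nat \<Rightarrow> real) \<Rightarrow> real \<Rightarrow> 'x \<Rightarrow> (real \<Rightarrow> 'q) \<Rightarrow> 'x" where
  "phiS T f K s t x0 \<sigma> = (THE x. sd_sol T f K s x0 \<sigma> x \<and> (\<forall>r<0. x r = 0)) t"

definition UGES :: "(real \<Rightarrow> 'x::real_normed_vector \<Rightarrow> (real \<Rightarrow> 'q) \<Rightarrow> 'x) \<Rightarrow> bool" where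
  "UGES \<phi> \<longleftrightarrow> (\<exists>M lam. M > 0 \<and> lam > 0 \<and>
     (\<forall>t\<ge>0. \<forall>x. \<forall>\<sigma>\<in>PC. norm (\<phi> t x \<sigma>) \<le> M * exp (- lam * t) * norm x))"

end

theory Submission
  imports Defs
begin

definition vc :: "(real \<Rightarrow> 'x::banach \<Rightarrow> 'x) \<Rightarrow> (real \<Rightarrow> 'x) \<Rightarrow> real \<Rightarrow> real \<Rightarrow> (real \<Rightarrow> 'x) \<Rightarrow> bool" where
  "vc T F a b x \<longleftrightarrow> (\<lambda>r. T (-r) (F r)) integrable_on {a..b} \<and>
     (\<forall>t\<in>{a..b}. x t = T (t - a) (x a) + integral {a..t} (\<lambda>r. T (t - r) (F r)))"

locale c0g =
  fixes T :: "real \<Rightarrow> 'x::banach \<Rightarrow> 'x"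
  assumes c0: "C0_group T"
begin

lemma blin: "bounded_linear (T t)"
  using c0 unfolding C0_group_def by auto

lemma T0[simp]: "T 0 v = v"
  using c0 unfolding C0_group_def by auto

lemma Tadd: "T (s + t) v = T s (T t v)"
  using c0 unfolding C0_group_def by auto

lemma T_diff: "T t (v - w) = T t v - T t w"
  using linear_diff[OF bounded_linear.linear[OF blin]] by auto
lemma T_plus: "T t (v + w) = T t v + T t w"
  using linear_add[OF bounded_linear.linear[OF blin]] by auto
lemma T_scale: "T t (c *\<^sub>R v) = c *\<^sub>R T t v"
  using linear_scale[OF bounded_linear.linear[OF blin]] by auto
lemma T_zero[simp]: "T t 0 = 0"
  using linear_0[OF bounded_linear.linear[OF blin]] by auto

lemma T_at0: "((\<lambda>h. T h v) \<longlongrightarrow> v) (at 0)"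
  using c0 unfolding C0_group_def by auto

lemma Tcont_at: "isCont (\<lambda>t. T t v) t"
proof -
  have "((\<lambda>h. T t (T h v)) \<longlongrightarrow> T t v) (at 0)"
    using bounded_linear.tendsto[OF blin T_at0] .
  then have "((\<lambda>h. T (t + h) v) \<longlongrightarrow> T t v) (at 0)"
    by (simp add: Tadd)
  then show ?thesis
    by (simp add: isCont_iff)
qed

lemma Tcont: "continuous_on S (\<lambda>t. T t v)"
  by (simp add: Tcont_at continuous_at_imp_continuous_on)

lemma UBP: "\<exists>C>0. \<forall>t\<in>{a..b}. \<forall>v. norm (T t v) \<le> C * norm v"
proof -
  define E where "E n = {v. \<forall>t\<in>{a..b}. norm (T t v) \<le> real n}" for n :: nat
  have clE: "closed (E n)" for n
  proof -
    have "E n = (\<Inter>t\<in>{a..b}. {v. norm (T t v) \<le> real n})"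
      unfolding E_def by auto
    moreover have "closed {v. norm (T t v) \<le> real n}" for t
      by (intro closed_Collect_le continuous_intros bounded_linear.continuous_on[OF blin])
    ultimately show ?thesis by auto
  qed
  have covE0: "v \<in> (\<Union>n. E n)" for v
  proof -
    have "compact ((\<lambda>t. norm (T t v)) ` {a..b})"
      by (intro compact_continuous_image continuous_intros Tcont) auto
    then obtain B where B: "\<forall>y\<in>(\<lambda>t. norm (T t v)) ` {a..b}. \<bar>y\<bar> \<le> B"
      using compact_imp_bounded bounded_real by blast
    have "v \<in> E (nat \<lceil>B\<rceil>)"
      unfolding E_def
    proof (intro CollectI ballI)
      fix t assume "t \<in> {a..b}"
      then have "norm (T t v) \<le> B" using B by force
      then show "norm (T t v) \<le> real (nat \<lceil>B\<rceil>)" using real_nat_ceiling_ge[of B] by linarith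
    qed
    then show "v \<in> (\<Union>n. E n)" by auto
  qed
  have covE: "(\<Union>n. E n) = UNIV" using covE0 by auto
  have "\<exists>n. interior (E n) \<noteq> {}"
  proof (rule ccontr)
    assume "\<nexists>n. interior (E n) \<noteq> {}"
    then have "euclidean interior_of \<Union>(range E) = {}"
      by (intro Baire_category_alt) (auto simp: completely_metrizable_space_euclidean clE closed_closedin[symmetric])
    then show False using covE by simp
  qed
  then obtain n v0 where "v0 \<in> interior (E n)" by auto
  then obtain r where r: "r > 0" "ball v0 r \<subseteq> E n"
    by (meson open_contains_ball open_interior interior_subset subset_trans)
  have "norm (T t w) \<le> (4 * real n / r + 1) * norm w" if t: "t \<in> {a..b}" for t w
  proof (cases "w = 0")
    case True then show ?thesis by simp
  next
    case False
    define w' where "w' = (r / 2 / norm w) *\<^sub>R w"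
    have nw': "norm w' = r / 2" using False r unfolding w'_def by auto
    have "v0 + w' \<in> E n" using r nw' by (intro subsetD[OF r(2)]) (auto simp: dist_norm)
    then have 1: "norm (T t (v0 + w')) \<le> real n" using t unfolding E_def by auto
    have "v0 \<in> E n" using r by auto
    then have 2: "norm (T t v0) \<le> real n" using t unfolding E_def by auto
    have "norm (T t w') \<le> 2 * real n"
      using 1 2 norm_triangle_ineq4[of "T t (v0 + w')" "T t v0"] by (simp add: T_plus)
    then have "(r / 2 / norm w) * norm (T t w) \<le> 2 * real n"
      using r unfolding w'_def T_scale by simp
    then have "norm (T t w) \<le> 4 * real n / r * norm w"
      using r False by (simp add: field_simps)
    moreover have "4 * real n / r * norm w \<le> (4 * real n / r + 1) * norm w" by (simp add: distrib_right)
    ultimately show ?thesis by linarith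
  qed
  moreover have "4 * real n / r + 1 > 0" using r by (simp add: add_nonneg_pos)
  ultimately show ?thesis by blast
qed

lemma UBP1: "\<exists>C\<ge>1. \<forall>t\<in>{a..b}. \<forall>v. norm (T t v) \<le> C * norm v"
proof -
  obtain C where "C > 0" "\<forall>t\<in>{a..b}. \<forall>v. norm (T t v) \<le> C * norm v" using UBP by blast
  then show ?thesis
  proof (intro exI[of _ "max C 1"] conjI ballI allI)
    fix t v assume "t \<in> {a..b}"
    then have "norm (T t v) \<le> C * norm v" using \<open>\<forall>t\<in>{a..b}. \<forall>v. norm (T t v) \<le> C * norm v\<close> by auto
    also have "\<dots> \<le> max C 1 * norm v" by (intro mult_right_mono) auto
    finally show "norm (T t v) \<le> max C 1 * norm v" .
  qed auto
qed

lemma Tjoint: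
  assumes "continuous_on S a" "continuous_on S b"
  shows "continuous_on S (\<lambda>r. T (a r) (b r))"
  unfolding continuous_on_def
proof
  fix r0 assume r0: "r0 \<in> S"
  obtain C where C: "C > 0" "\<forall>t\<in>{a r0 - 1..a r0 + 1}. \<forall>v. norm (T t v) \<le> C * norm v"
    using UBP by blast
  have ta: "(a \<longlongrightarrow> a r0) (at r0 within S)" and tb: "(b \<longlongrightarrow> b r0) (at r0 within S)"
    using assms r0 by (auto simp: continuous_on_def)
  have ev: "\<forall>\<^sub>F r in at r0 within S. dist (a r) (a r0) < 1"
    using tendstoD[OF ta] by simp
  have "\<forall>\<^sub>F r in at r0 within S. norm (T (a r) (b r) - T (a r0) (b r0)) \<le>
        C * norm (b r - b r0) + norm (T (a r) (b r0) - T (a r0) (b r0))"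
    using ev
  proof eventually_elim
    case (elim r)
    have "a r \<in> {a r0 - 1..a r0 + 1}" using elim by (auto simp: dist_real_def)
    then have "norm (T (a r) (b r - b r0)) \<le> C * norm (b r - b r0)" using C by auto
    moreover have eq: "T (a r) (b r) - T (a r0) (b r0) = T (a r) (b r - b r0) + (T (a r) (b r0) - T (a r0) (b r0))"
      by (simp add: T_diff)
    have "norm (T (a r) (b r) - T (a r0) (b r0)) \<le>
       norm (T (a r) (b r - b r0)) + norm (T (a r) (b r0) - T (a r0) (b r0))"
      unfolding eq by (rule norm_triangle_ineq)
    ultimately show ?case by linarith
  qed
  moreover have "((\<lambda>r. C * norm (b r - b r0) + norm (T (a r) (b r0) - T (a r0) (b r0))) \<longlongrightarrow> 0) (at r0 within S)"
  proof -
    have 1: "((\<lambda>r. C * norm (b r - b r0)) \<longlongrightarrow> C * norm (b r0 - b r0)) (at r0 within S)"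
      by (intro tendsto_intros tb)
    have "((\<lambda>r. T (a r) (b r0)) \<longlongrightarrow> T (a r0) (b r0)) (at r0 within S)"
      by (rule isCont_tendsto_compose[OF Tcont_at ta])
    then have 2: "((\<lambda>r. norm (T (a r) (b r0) - T (a r0) (b r0))) \<longlongrightarrow> norm (T (a r0) (b r0) - T (a r0) (b r0))) (at r0 within S)"
      by (intro tendsto_intros)
    show ?thesis using tendsto_add[OF 1 2] by simp
  qed
  ultimately have "((\<lambda>r. T (a r) (b r) - T (a r0) (b r0)) \<longlongrightarrow> 0) (at r0 within S)"
    by (rule Lim_null_comparison)
  then show "((\<lambda>r. T (a r) (b r)) \<longlongrightarrow> T (a r0) (b r0)) (at r0 within S)"
    by (rule LIM_zero_cancel)
qed


end

lemma gronwall: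
  fixes \<phi> :: "real \<Rightarrow> real"
  assumes cont: "continuous_on {a..b} \<phi>" and A: "A \<ge> 0"
    and le: "\<And>t. t \<in> {a..b} \<Longrightarrow> \<phi> t \<le> \<alpha> + A * integral {a..t} \<phi>"
    and t: "t \<in> {a..b}"
  shows "\<phi> t \<le> \<alpha> * exp (A * (t - a))"
proof -
  define \<Psi> where "\<Psi> s = integral {a..s} \<phi>" for s
  define \<Theta> where "\<Theta> s = exp (- A * (s - a)) * (\<alpha> + A * \<Psi> s)" for s
  have cPsi: "continuous_on {a..b} \<Psi>"
    unfolding \<Psi>_def by (intro indefinite_integral_continuous_1 integrable_continuous_real cont)
  have cT: "continuous_on {a..t} \<Theta>"
      unfolding \<Theta>_def using t
      by (intro continuous_intros continuous_on_subset[OF cPsi]) auto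
  have dd: "\<exists>y. (\<Theta> has_real_derivative y) (at x) \<and> y \<le> 0" if x: "a < x" "x < t" for x
  proof -
    have xb: "x < b" using t x by auto
    have dPsi: "(\<Psi> has_real_derivative \<phi> x) (at x)"
    proof -
      have "(\<lambda>x. integral {a..x} \<phi>) = \<Psi>" by (simp add: \<Psi>_def fun_eq_iff)
      then show ?thesis
        using integral_has_real_derivative[OF cont, of x] x xb
        by (simp add: at_within_Icc_at)
    qed
    have d1: "((\<lambda>s. exp (- A * (s - a))) has_real_derivative exp (- A * (x - a)) * (- A)) (at x)"
      by (auto intro!: derivative_eq_intros)
    have d2: "((\<lambda>s. \<alpha> + A * \<Psi> s) has_real_derivative A * \<phi> x) (at x)"
      using dPsi by (auto intro!: derivative_eq_intros)
    have d: "(\<Theta> has_real_derivative exp (- A * (x - a)) * (- A) * (\<alpha> + A * \<Psi> x) + A * \<phi> x * exp (- A * (x - a))) (at x)"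
      unfolding \<Theta>_def by (rule DERIV_mult[OF d1 d2])
    have "\<phi> x \<le> \<alpha> + A * \<Psi> x" using le[of x] x xb by (simp add: \<Psi>_def)
    then have "A * (\<phi> x - (\<alpha> + A * \<Psi> x)) \<le> 0" using A by (simp add: mult_nonneg_nonpos)
    then have "exp (- A * (x - a)) * (A * (\<phi> x - (\<alpha> + A * \<Psi> x))) \<le> 0"
      by (simp add: mult_nonneg_nonpos)
    then have "exp (- A * (x - a)) * (- A) * (\<alpha> + A * \<Psi> x) + A * \<phi> x * exp (- A * (x - a)) \<le> 0"
      by (simp add: algebra_simps)
    then show "\<exists>y. (\<Theta> has_real_derivative y) (at x) \<and> y \<le> 0" using d by blast
  qed
  have "\<Theta> a \<ge> \<Theta> t"
    using DERIV_nonpos_imp_decreasing_open[of a t \<Theta>] dd cT t by auto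
  then have "exp (- A * (t - a)) * (\<alpha> + A * \<Psi> t) \<le> \<alpha>"
    by (simp add: \<Theta>_def \<Psi>_def)
  then have "exp (A * (t - a)) * (exp (- A * (t - a)) * (\<alpha> + A * \<Psi> t)) \<le> exp (A * (t - a)) * \<alpha>"
    by (intro mult_left_mono) auto
  moreover have e1: "exp (A * (t - a)) * exp (- A * (t - a)) = 1"
    by (simp add: exp_add[symmetric])
  ultimately have "\<alpha> + A * \<Psi> t \<le> exp (A * (t - a)) * \<alpha>"
    by (simp only: mult.assoc[symmetric] e1 mult_1_left)
  moreover have "exp (A * (t - a)) * \<alpha> = \<alpha> * exp (A * (t - a))" by (rule mult.commute)
  moreover have "\<phi> t \<le> \<alpha> + A * \<Psi> t" using le[OF t] by (simp add: \<Psi>_def)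
  ultimately show ?thesis by linarith
qed

context c0g begin
lemma Tshift: "T (t - r) v = T t (T (-r) v)"
  using Tadd[of t "-r" v] by simp

lemma factor:
  assumes "(\<lambda>r. T (-r) (F r)) integrable_on S"
  shows "(\<lambda>r. T (t - r) (F r)) integrable_on S"
    and "integral S (\<lambda>r. T (t - r) (F r)) = T t (integral S (\<lambda>r. T (-r) (F r)))"
proof -
  have eq: "(\<lambda>r. T (t - r) (F r)) = T t \<circ> (\<lambda>r. T (-r) (F r))"
    by (auto simp: Tshift)
  show "(\<lambda>r. T (t - r) (F r)) integrable_on S"
    unfolding eq by (rule integrable_linear[OF assms blin])
  show "integral S (\<lambda>r. T (t - r) (F r)) = T t (integral S (\<lambda>r. T (-r) (F r)))"
    unfolding eq by (rule integral_linear[OF assms blin])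
qed

lemma vc_integrable:
  assumes "vc T F a b x" "{c..d} \<subseteq> {a..b}"
  shows "(\<lambda>r. T (-r) (F r)) integrable_on {c..d}"
  using assms integrable_subinterval_real unfolding vc_def by blast

lemma vc_eq:
  assumes "vc T F a b x" "t \<in> {a..b}"
  shows "x t = T (t - a) (x a) + T t (integral {a..t} (\<lambda>r. T (-r) (F r)))"
proof -
  have "(\<lambda>r. T (-r) (F r)) integrable_on {a..t}"
    using vc_integrable[OF assms(1)] assms(2) by auto
  moreover have "x t = T (t - a) (x a) + integral {a..t} (\<lambda>r. T (t - r) (F r))"
    using assms unfolding vc_def by blast
  ultimately show ?thesis by (simp only: factor(2))
qed

lemma vc_cont:
  assumes "vc T F a b x"
  shows "continuous_on {a..b} x"
proof -
  have int: "(\<lambda>r. T (-r) (F r)) integrable_on {a..b}" using assms unfolding vc_def by auto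
  have "continuous_on {a..b} (\<lambda>t. T (t - a) (x a) + T t (integral {a..t} (\<lambda>r. T (-r) (F r))))"
    by (intro continuous_intros Tjoint indefinite_integral_continuous_1 int)
  then show ?thesis
  proof (rule continuous_on_eq)
    fix t assume "t \<in> {a..b}"
    from vc_eq[OF assms this] show "T (t - a) (x a) + T t (integral {a..t} (\<lambda>r. T (-r) (F r))) = x t"
      by (rule sym)
  qed
qed

lemma vc_mono:
  assumes "vc T F a b x" "b' \<le> b"
  shows "vc T F a b' x"
proof -
  have "(\<lambda>r. T (-r) (F r)) integrable_on {a..b'}"
    using assms unfolding vc_def by (meson atLeastatMost_subset_iff integrable_subinterval_real order_refl)
  moreover have "\<forall>t\<in>{a..b'}. x t = T (t - a) (x a) + integral {a..t} (\<lambda>r. T (t - r) (F r))"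
    using assms unfolding vc_def by (meson atLeastAtMost_iff order_trans)
  ultimately show ?thesis unfolding vc_def by blast
qed

lemma vc_sub:
  assumes vc: "vc T F a b x" and c: "a \<le> c" "c \<le> b"
  shows "vc T F c b x"
  unfolding vc_def
proof (intro conjI ballI)
  let ?G = "\<lambda>r. T (-r) (F r)"
  show "?G integrable_on {c..b}" using vc_integrable[OF vc] c by auto
  fix t assume t: "t \<in> {c..b}"
  have intt: "?G integrable_on {a..t}" using vc_integrable[OF vc] t c by auto
  have xt: "x t = T (t - a) (x a) + T t (integral {a..t} ?G)" by (rule vc_eq[OF vc]) (use t c in auto)
  have xc: "x c = T (c - a) (x a) + T c (integral {a..c} ?G)" by (rule vc_eq[OF vc]) (use t c in auto)
  have comb: "integral {a..c} ?G + integral {c..t} ?G = integral {a..t} ?G"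
    using Henstock_Kurzweil_Integration.integral_combine[OF c(1) _ intt] t by auto
  have "T (t - c) (x c) = T (t - c) (T (c - a) (x a)) + T (t - c) (T c (integral {a..c} ?G))"
    by (simp add: xc T_plus)
  also have "\<dots> = T (t - a) (x a) + T t (integral {a..c} ?G)"
    by (simp add: Tadd[symmetric])
  finally have "x t = T (t - c) (x c) + T t (integral {c..t} ?G)"
    using xt comb[symmetric] by (simp add: T_plus)
  moreover have "?G integrable_on {c..t}" using vc_integrable[OF vc] t c by auto
  ultimately show "x t = T (t - c) (x c) + integral {c..t} (\<lambda>r. T (t - r) (F r))"
    by (simp add: factor(2))
qed

lemma vc_join:
  assumes v1: "vc T F a c x" and v2: "vc T F c b x" and c: "a \<le> c" "c \<le> b"
  shows "vc T F a b x"
  unfolding vc_def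
proof (intro conjI ballI)
  let ?G = "\<lambda>r. T (-r) (F r)"
  show intab: "?G integrable_on {a..b}"
    using Henstock_Kurzweil_Integration.integrable_combine[OF c] v1 v2 unfolding vc_def by auto
  fix t assume t: "t \<in> {a..b}"
  show "x t = T (t - a) (x a) + integral {a..t} (\<lambda>r. T (t - r) (F r))"
  proof (cases "t \<le> c")
    case True
    then show ?thesis using v1 t unfolding vc_def by (meson atLeastAtMost_iff)
  next
    case False
    have intt: "?G integrable_on {a..t}" using intab t by (auto intro: integrable_subinterval_real)
    have xt: "x t = T (t - c) (x c) + T t (integral {c..t} ?G)" by (rule vc_eq[OF v2]) (use t False in auto)
    have xc: "x c = T (c - a) (x a) + T c (integral {a..c} ?G)" by (rule vc_eq[OF v1]) (use c in auto)
    have comb: "integral {a..c} ?G + integral {c..t} ?G = integral {a..t} ?G"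
      using Henstock_Kurzweil_Integration.integral_combine[OF c(1) _ intt] False by auto
    have "T (t - c) (x c) = T (t - a) (x a) + T t (integral {a..c} ?G)"
      by (simp add: xc T_plus Tadd[symmetric])
    then have "x t = T (t - a) (x a) + T t (integral {a..t} ?G)"
      using xt comb[symmetric] by (simp add: T_plus)
    then show ?thesis using intt by (simp add: factor(2))
  qed
qed

lemma vc_congr:
  assumes vc: "vc T F a b x" and F: "\<And>r. r \<in> {a..<b} \<Longrightarrow> F r = F' r"
    and X: "\<And>r. r \<in> {a..b} \<Longrightarrow> x r = x' r"
  shows "vc T F' a b x'"
  unfolding vc_def
proof (intro conjI ballI)
  have iF: "(\<lambda>r. T (-r) (F r)) integrable_on {a..b}" using vc unfolding vc_def by blast
  show "(\<lambda>r. T (-r) (F' r)) integrable_on {a..b}"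
    by (rule integrable_spike_finite[where S="{b}" and f="\<lambda>r. T (-r) (F r)"]) (auto simp: F iF)
  fix t assume t: "t \<in> {a..b}"
  have "integral {a..t} (\<lambda>r. T (t - r) (F r)) = integral {a..t} (\<lambda>r. T (t - r) (F' r))"
    by (rule integral_spike[of "{b}"]) (use t in \<open>auto simp: F\<close>)
  note 2 = this
  have 1: "x t = T (t - a) (x a) + integral {a..t} (\<lambda>r. T (t - r) (F r))"
    using vc t unfolding vc_def by blast
  have "x' t = x t" using X t by auto
  also have "\<dots> = T (t - a) (x a) + integral {a..t} (\<lambda>r. T (t - r) (F r))" by (rule 1)
  also have "\<dots> = T (t - a) (x' a) + integral {a..t} (\<lambda>r. T (t - r) (F' r))"
    using 2 X[of a] t by simp
  finally show "x' t = T (t - a) (x' a) + integral {a..t} (\<lambda>r. T (t - r) (F' r))" .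
qed

lemma vc_shift:
  assumes vc: "vc T F a b x"
  shows "vc T (\<lambda>r. F (r - c)) (a + c) (b + c) (\<lambda>t. x (t - c))"
  unfolding vc_def
proof (intro conjI ballI)
  have i1: "(\<lambda>r. T (-c) (T (-r) (F r))) integrable_on {a..b}"
    using integrable_linear[OF _ blin, of "\<lambda>r. T (-r) (F r)" "{a..b}" "-c"] vc
    unfolding vc_def by (simp add: o_def)
  have "(\<lambda>r. T (-c) (T (-(r + - c)) (F (r + - c)))) integrable_on {a - - c..b - - c}"
    by (rule integrable_shift_real_ivl[OF i1])
  then show "(\<lambda>r. T (-r) (F (r - c))) integrable_on {a + c..b + c}"
    by (simp add: Tadd[symmetric])
  fix t assume t: "t \<in> {a + c..b + c}"
  have "t - c \<in> {a..b}" using t by auto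
  then have "x (t - c) = T (t - c - a) (x a) + integral {a..t - c} (\<lambda>r. T (t - c - r) (F r))"
    using vc unfolding vc_def by blast
  moreover have "integral {a + c - c..t - c} (\<lambda>r. T (t - (r + c)) (F (r + c - c))) = integral {a + c..t} (\<lambda>r. T (t - r) (F (r - c)))"
    by (rule integral_shift_real_ivl)
  moreover have E: "(\<lambda>r. T (t - (r + c)) (F (r + c - c))) = (\<lambda>r. T (t - c - r) (F r))"
    by (rule ext) (simp add: algebra_simps)
  moreover have "a + c - c = a" "t - (a + c) = t - c - a" by simp_all
  ultimately show "x (t - c) = T (t - (a + c)) (x (a + c - c)) + integral {a + c..t} (\<lambda>r. T (t - r) (F (r - c)))"
    by metis
qed

lemma shift_integral0:
  "integral {0..t - a} (\<lambda>r. T (t - a - r) (F (r + a))) = integral {a..t} (\<lambda>r. T (t - r) (F r))"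
proof -
  have I: "integral {a - a..t - a} (\<lambda>r. T (t - (r + a)) (F (r + a))) = integral {a..t} (\<lambda>r. T (t - r) (F r))"
    by (rule integral_shift_real_ivl)
  have E: "(\<lambda>r. T (t - (r + a)) (F (r + a))) = (\<lambda>r. T (t - a - r) (F (r + a)))"
    by (rule ext) (simp add: algebra_simps)
  have Z: "a - a = 0" by simp
  show ?thesis using I unfolding E Z .
qed

end

context c0g begin

lemma int_diff_T:
  assumes i1: "(\<lambda>r. T (-r) (F1 r)) integrable_on S" and i2: "(\<lambda>r. T (-r) (F2 r)) integrable_on S"
  shows "(\<lambda>r. T (-r) (F1 r - F2 r)) integrable_on S"
    and "integral S (\<lambda>r. T (t - r) (F1 r)) - integral S (\<lambda>r. T (t - r) (F2 r)) =
         integral S (\<lambda>r. T (t - r) (F1 r - F2 r))"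
proof -
  show "(\<lambda>r. T (-r) (F1 r - F2 r)) integrable_on S"
    using integrable_diff[OF i1 i2] by (simp add: T_diff)
  have "integral S (\<lambda>r. T (t - r) (F1 r)) - integral S (\<lambda>r. T (t - r) (F2 r)) =
        integral S (\<lambda>r. T (t - r) (F1 r) - T (t - r) (F2 r))"
    by (rule integral_diff[symmetric]) (auto intro: factor(1) i1 i2)
  then show "integral S (\<lambda>r. T (t - r) (F1 r)) - integral S (\<lambda>r. T (t - r) (F2 r)) =
         integral S (\<lambda>r. T (t - r) (F1 r - F2 r))"
    by (simp add: T_diff)
qed

lemma int_bound:
  assumes iH: "(\<lambda>r. T (-r) (H r)) integrable_on {a..t}" and ig: "g integrable_on {a..t}"
    and Hg: "\<And>r. r \<in> {a..t} \<Longrightarrow> norm (H r) \<le> g r"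
    and C: "C \<ge> 0" "\<And>s v. s \<in> {0..t - a} \<Longrightarrow> norm (T s v) \<le> C * norm v"
  shows "norm (integral {a..t} (\<lambda>r. T (t - r) (H r))) \<le> C * integral {a..t} g"
proof -
  have "norm (integral {a..t} (\<lambda>r. T (t - r) (H r))) \<le> integral {a..t} (\<lambda>r. C * g r)"
  proof (rule integral_norm_bound_integral)
    show "(\<lambda>r. T (t - r) (H r)) integrable_on {a..t}" by (rule factor(1)[OF iH])
    show "(\<lambda>r. C * g r) integrable_on {a..t}" using ig by (rule integrable_on_mult_right)
    fix r assume r: "r \<in> {a..t}"
    then have "norm (T (t - r) (H r)) \<le> C * norm (H r)" using C(2)[of "t - r"] by auto
    also have "\<dots> \<le> C * g r" using Hg[OF r] C(1) by (rule mult_left_mono)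
    finally show "norm (T (t - r) (H r)) \<le> C * g r" .
  qed
  then show ?thesis by simp
qed

lemma vc_diff:
  assumes v1: "vc T F1 a b x1" and v2: "vc T F2 a b x2" and t: "t \<in> {a..b}"
  shows "x1 t - x2 t = T (t - a) (x1 a - x2 a) + integral {a..t} (\<lambda>r. T (t - r) (F1 r - F2 r))"
    and "(\<lambda>r. T (-r) (F1 r - F2 r)) integrable_on {a..t}"
proof -
  have i1: "(\<lambda>r. T (-r) (F1 r)) integrable_on {a..t}" using vc_integrable[OF v1] t by auto
  have i2: "(\<lambda>r. T (-r) (F2 r)) integrable_on {a..t}" using vc_integrable[OF v2] t by auto
  have e1: "x1 t = T (t - a) (x1 a) + integral {a..t} (\<lambda>r. T (t - r) (F1 r))"
    using v1 t unfolding vc_def by blast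
  have e2: "x2 t = T (t - a) (x2 a) + integral {a..t} (\<lambda>r. T (t - r) (F2 r))"
    using v2 t unfolding vc_def by blast
  show "(\<lambda>r. T (-r) (F1 r - F2 r)) integrable_on {a..t}" by (rule int_diff_T(1)[OF i1 i2])
  have "x1 t - x2 t = (T (t - a) (x1 a) - T (t - a) (x2 a)) +
     (integral {a..t} (\<lambda>r. T (t - r) (F1 r)) - integral {a..t} (\<lambda>r. T (t - r) (F2 r)))"
    by (subst e1, subst e2) (simp add: algebra_simps)
  also have "\<dots> = T (t - a) (x1 a - x2 a) + integral {a..t} (\<lambda>r. T (t - r) (F1 r - F2 r))"
    by (simp add: T_diff int_diff_T(2)[OF i1 i2])
  finally show "x1 t - x2 t = T (t - a) (x1 a - x2 a) + integral {a..t} (\<lambda>r. T (t - r) (F1 r - F2 r))" .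
qed

lemma vc_unique:
  assumes v1: "vc T (\<lambda>r. G r (x1 r)) a b x1" and v2: "vc T (\<lambda>r. G r (x2 r)) a b x2"
    and L: "L \<ge> 0" "\<And>r w1 w2. r \<in> {a..b} \<Longrightarrow> norm (G r w1 - G r w2) \<le> L * norm (w1 - w2)"
    and x0: "x1 a = x2 a" and t: "t \<in> {a..b}"
  shows "x1 t = x2 t"
proof -
  obtain C where C: "C \<ge> 1" "\<And>s v. s \<in> {0..b - a} \<Longrightarrow> norm (T s v) \<le> C * norm v"
    using UBP1[of 0 "b - a"] by blast
  define \<phi> where "\<phi> r = norm (x1 r - x2 r)" for r
  have c\<phi>: "continuous_on {a..b} \<phi>"
    unfolding \<phi>_def using vc_cont[OF v1] vc_cont[OF v2] by (intro continuous_intros)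
  have le: "\<phi> s \<le> 0 + (C * L) * integral {a..s} \<phi>" if s: "s \<in> {a..b}" for s
  proof -
    have "x1 s - x2 s = integral {a..s} (\<lambda>r. T (s - r) (G r (x1 r) - G r (x2 r)))"
      using vc_diff(1)[OF v1 v2 s] x0 by simp
    then have "\<phi> s = norm (integral {a..s} (\<lambda>r. T (s - r) (G r (x1 r) - G r (x2 r))))"
      by (simp add: \<phi>_def)
    also have "\<dots> \<le> C * integral {a..s} (\<lambda>r. L * \<phi> r)"
    proof (rule int_bound)
      show "(\<lambda>r. T (-r) (G r (x1 r) - G r (x2 r))) integrable_on {a..s}"
        by (rule vc_diff(2)[OF v1 v2 s])
      show "(\<lambda>r. L * \<phi> r) integrable_on {a..s}"
        using s by (intro integrable_continuous_real continuous_intros continuous_on_subset[OF c\<phi>]) auto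
      show "norm (G r (x1 r) - G r (x2 r)) \<le> L * \<phi> r" if "r \<in> {a..s}" for r
        using L(2)[of r "x1 r" "x2 r"] that s by (auto simp: \<phi>_def)
      show "C \<ge> 0" using C by simp
      show "norm (T s' v) \<le> C * norm v" if "s' \<in> {0..s - a}" for s' v
        using C(2)[of s' v] that s by auto
    qed
    finally show ?thesis by simp
  qed
  have "\<phi> t \<le> 0 * exp ((C * L) * (t - a))"
    by (rule gronwall[OF c\<phi> _ le t]) (use C L in auto)
  then show ?thesis by (simp add: \<phi>_def)
qed

end

lemma Q_int:
  fixes a t :: real
  assumes "a \<le> t"
  shows "((\<lambda>r. (r - a) ^ n / fact n) has_integral ((t - a) ^ Suc n / fact (Suc n))) {a..t}"
proof -
  have "((\<lambda>r. (r - a) ^ n / fact n) has_integral ((t - a) ^ Suc n / fact (Suc n) - (a - a) ^ Suc n / fact (Suc n))) {a..t}"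
  proof (rule fundamental_theorem_of_calculus[OF assms])
    fix r assume "r \<in> {a..t}"
    have "((\<lambda>r. (r - a) ^ Suc n / fact (Suc n)) has_real_derivative
           (real (Suc n) * (r - a) ^ n * 1 / fact (Suc n))) (at r within {a..t})"
      by (intro derivative_eq_intros DERIV_power_Suc) auto
    moreover have "real (Suc n) * (r - a) ^ n * 1 / fact (Suc n) = (r - a) ^ n / fact n"
      by (simp add: fact_Suc del: of_nat_Suc)
    ultimately show "((\<lambda>r. (r - a) ^ Suc n / fact (Suc n)) has_vector_derivative (r - a) ^ n / fact n) (at r within {a..t})"
      by (simp add: has_real_derivative_iff_has_vector_derivative)
  qed
  then show ?thesis by simp
qed

context c0g begin

lemma vc_exists:
  assumes ab: "a \<le> b" and L: "L \<ge> 0" "\<And>r w1 w2. r \<in> {a..b} \<Longrightarrow> norm (G r w1 - G r w2) \<le> L * norm (w1 - w2)"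
    and I: "\<And>w. continuous_on {a..b} w \<Longrightarrow> (\<lambda>r. T (-r) (G r (w r))) integrable_on {a..b}"
  shows "\<exists>x. x a = y \<and> vc T (\<lambda>r. G r (x r)) a b x"
proof -
  obtain C where C: "C \<ge> 1" "\<And>s v. s \<in> {0..b - a} \<Longrightarrow> norm (T s v) \<le> C * norm v"
    using UBP1[of 0 "b - a"] by blast
  define K where "K = C * (L + 1)"
  have K: "K > 0" using C L unfolding K_def by (simp add: add_nonneg_pos)
  define \<Phi> where "\<Phi> w t = T (t - a) y + integral {a..t} (\<lambda>r. T (t - r) (G r (w r)))" for w t
  have \<Phi>cont: "continuous_on {a..b} (\<Phi> w)" if w: "continuous_on {a..b} w" for w
  proof -
    have int: "(\<lambda>r. T (-r) (G r (w r))) integrable_on {a..b}" by (rule I[OF w])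
    have "continuous_on {a..b} (\<lambda>t. T (t - a) y + T t (integral {a..t} (\<lambda>r. T (-r) (G r (w r)))))"
      by (intro continuous_intros Tjoint indefinite_integral_continuous_1 int)
    then show ?thesis
    proof (rule continuous_on_eq)
      fix t assume t: "t \<in> {a..b}"
      have "(\<lambda>r. T (-r) (G r (w r))) integrable_on {a..t}"
        using int t by (auto intro: integrable_subinterval_real)
      then show "T (t - a) y + T t (integral {a..t} (\<lambda>r. T (-r) (G r (w r)))) = \<Phi> w t"
        unfolding \<Phi>_def by (simp add: factor(2))
    qed
  qed
  have \<Phi>diff: "norm (\<Phi> w1 t - \<Phi> w2 t) \<le> K * integral {a..t} (\<lambda>r. norm (w1 r - w2 r))"
    if w1: "continuous_on {a..b} w1" and w2: "continuous_on {a..b} w2" and t: "t \<in> {a..b}" for w1 w2 t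
  proof -
    have i1: "(\<lambda>r. T (-r) (G r (w1 r))) integrable_on {a..t}"
      using I[OF w1] t by (auto intro: integrable_subinterval_real)
    have i2: "(\<lambda>r. T (-r) (G r (w2 r))) integrable_on {a..t}"
      using I[OF w2] t by (auto intro: integrable_subinterval_real)
    have eq: "\<Phi> w1 t - \<Phi> w2 t = integral {a..t} (\<lambda>r. T (t - r) (G r (w1 r) - G r (w2 r)))"
      unfolding \<Phi>_def using int_diff_T(2)[OF i1 i2, of t] by simp
    have "norm (\<Phi> w1 t - \<Phi> w2 t) \<le> C * integral {a..t} (\<lambda>r. (L + 1) * norm (w1 r - w2 r))"
      unfolding eq
    proof (rule int_bound)
      show "(\<lambda>r. T (-r) (G r (w1 r) - G r (w2 r))) integrable_on {a..t}" by (rule int_diff_T(1)[OF i1 i2])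
      show "(\<lambda>r. (L + 1) * norm (w1 r - w2 r)) integrable_on {a..t}"
        using t by (intro integrable_continuous_real continuous_intros continuous_on_subset[OF w1]
            continuous_on_subset[OF w2]) auto
      fix r assume r: "r \<in> {a..t}"
      have "norm (G r (w1 r) - G r (w2 r)) \<le> L * norm (w1 r - w2 r)" using L(2)[of r] r t by auto
      also have "\<dots> \<le> (L + 1) * norm (w1 r - w2 r)" by (intro mult_right_mono) auto
      finally show "norm (G r (w1 r) - G r (w2 r)) \<le> (L + 1) * norm (w1 r - w2 r)" .
    next
      show "C \<ge> 0" using C by simp
      fix s v assume "s \<in> {0..t - a}" then show "norm (T s v) \<le> C * norm v" using C(2)[of s v] t by auto
    qed
    then show ?thesis by (simp add: K_def)
  qed
  define g where "g = rec_nat (\<lambda>t. T (t - a) y) (\<lambda>n w. \<Phi> w)"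
  have g0: "g 0 = (\<lambda>t. T (t - a) y)" and gS: "\<And>n. g (Suc n) = \<Phi> (g n)" by (simp_all add: g_def)
  have gc: "continuous_on {a..b} (g n)" for n
  proof (induction n)
    case 0 then show ?case unfolding g0 by (intro Tcont[THEN continuous_on_compose2] continuous_intros) auto
  next
    case (Suc n) then show ?case unfolding gS by (rule \<Phi>cont)
  qed
  define d where "d n t = norm (g (Suc n) t - g n t)" for n t
  have dc: "continuous_on {a..b} (d n)" for n
    unfolding d_def by (intro continuous_intros gc)
  obtain B where B: "B \<ge> 0" "\<And>t. t \<in> {a..b} \<Longrightarrow> d 0 t \<le> B"
  proof -
    have "compact (d 0 ` {a..b})" by (intro compact_continuous_image dc) auto
    then obtain B where "\<forall>y\<in>d 0 ` {a..b}. \<bar>y\<bar> \<le> B" using compact_imp_bounded bounded_real by blast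
    then have "\<And>t. t \<in> {a..b} \<Longrightarrow> d 0 t \<le> B" by force
    moreover have "B \<ge> 0" using \<open>\<forall>y\<in>d 0 ` {a..b}. \<bar>y\<bar> \<le> B\<close> ab by force
    ultimately show ?thesis using that by blast
  qed
  have dbound: "\<forall>t\<in>{a..b}. d n t \<le> B * K ^ n * ((t - a) ^ n / fact n)" for n
  proof (induction n)
    case 0 then show ?case using B by simp
  next
    case (Suc n)
    show ?case
    proof
      fix t assume t: "t \<in> {a..b}"
      have Qi: "((\<lambda>r. (r - a) ^ n / fact n) has_integral ((t - a) ^ Suc n / fact (Suc n))) {a..t}"
        using Q_int t by auto
      have "d (Suc n) t = norm (\<Phi> (g (Suc n)) t - \<Phi> (g n) t)" by (simp add: d_def gS)
      also have "\<dots> \<le> K * integral {a..t} (d n)"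
      proof -
        have "d n = (\<lambda>r. norm (g (Suc n) r - g n r))" by (simp add: fun_eq_iff d_def)
        then show ?thesis using \<Phi>diff[OF gc gc t, of "Suc n" n] by simp
      qed
      also have "integral {a..t} (d n) \<le> integral {a..t} (\<lambda>r. B * K ^ n * ((r - a) ^ n / fact n))"
      proof (rule integral_le)
        show "d n integrable_on {a..t}"
          using t by (intro integrable_continuous_real continuous_on_subset[OF dc]) auto
        show "(\<lambda>r. B * K ^ n * ((r - a) ^ n / fact n)) integrable_on {a..t}"
          using Qi by (intro integrable_on_mult_right) (auto simp: has_integral_iff)
        show "d n r \<le> B * K ^ n * ((r - a) ^ n / fact n)" if "r \<in> {a..t}" for r
          using Suc that t by auto
      qed
      also have "integral {a..t} (\<lambda>r. B * K ^ n * ((r - a) ^ n / fact n)) = B * K ^ n * integral {a..t} (\<lambda>r. (r - a) ^ n / fact n)"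
        by (rule integral_mult_right)
      also have "\<dots> = B * K ^ n * ((t - a) ^ Suc n / fact (Suc n))"
        by (simp only: integral_unique[OF Qi])
      finally have "d (Suc n) t \<le> K * (B * K ^ n * ((t - a) ^ Suc n / fact (Suc n)))"
        using K by (simp add: mult_left_mono)
      then show "d (Suc n) t \<le> B * K ^ Suc n * ((t - a) ^ Suc n / fact (Suc n))"
        by (simp add: algebra_simps)
    qed
  qed
  define M where "M k = B * ((K * (b - a)) ^ k / fact k)" for k
  have dM: "norm (g (Suc k) t - g k t) \<le> M k" if t: "t \<in> {a..b}" for k t
  proof -
    have "norm (g (Suc k) t - g k t) = d k t" by (simp add: d_def)
    also have "\<dots> \<le> B * K ^ k * ((t - a) ^ k / fact k)" using dbound t by auto
    also have "\<dots> \<le> B * K ^ k * ((b - a) ^ k / fact k)"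
      using t K B by (intro mult_left_mono divide_right_mono power_mono) auto
    finally show ?thesis by (simp add: M_def power_mult_distrib)
  qed
  have sM: "summable M"
  proof -
    have "summable (\<lambda>k. inverse (fact k) * (K * (b - a)) ^ k)" by (rule summable_exp)
    then have "summable (\<lambda>k. B * (inverse (fact k) * (K * (b - a)) ^ k))" by (rule summable_mult)
    moreover have "M = (\<lambda>k. B * (inverse (fact k) * (K * (b - a)) ^ k))"
      by (simp add: fun_eq_iff M_def divide_inverse)
    ultimately show ?thesis by simp
  qed
  define x where "x t = g 0 t + (\<Sum>k. g (Suc k) t - g k t)" for t
  have ul0: "uniform_limit {a..b} (\<lambda>n t. \<Sum>k<n. g (Suc k) t - g k t) (\<lambda>t. \<Sum>k. g (Suc k) t - g k t) sequentially"
    by (rule Weierstrass_m_test[OF dM sM])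
  have "uniform_limit {a..b} (\<lambda>n t. g 0 t + (\<Sum>k<n. g (Suc k) t - g k t)) x sequentially"
    unfolding x_def by (intro uniform_limit_add uniform_limit_const ul0)
  moreover have "(\<lambda>n t. g 0 t + (\<Sum>k<n. g (Suc k) t - g k t)) = g"
    by (simp add: fun_eq_iff sum_lessThan_telescope[of "\<lambda>k. g k _"])
  ultimately have ul: "uniform_limit {a..b} g x sequentially" by simp
  have xc: "continuous_on {a..b} x"
    by (rule uniform_limit_theorem[OF _ ul]) (auto simp: gc)
  have fixp: "\<Phi> x t = x t" if t: "t \<in> {a..b}" for t
  proof -
    have l1: "(\<lambda>n. g (Suc n) t) \<longlonglongrightarrow> x t"
      using tendsto_uniform_limitI[OF ul t] by (rule LIMSEQ_Suc)
    have l2: "(\<lambda>n. g (Suc n) t) \<longlonglongrightarrow> \<Phi> x t"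
    proof (rule tendstoI)
      fix e :: real assume e: "e > 0"
      define e' where "e' = e / (K * (b - a) + 1)"
      have Kba: "K * (b - a) \<ge> 0" using K ab by simp
      have e': "e' > 0" using e Kba by (simp add: e'_def)
      have "\<forall>\<^sub>F n in sequentially. \<forall>r\<in>{a..b}. dist (g n r) (x r) < e'"
        by (rule uniform_limitD[OF ul e'])
      then show "\<forall>\<^sub>F n in sequentially. dist (g (Suc n) t) (\<Phi> x t) < e"
      proof eventually_elim
        case (elim n)
        have "dist (g (Suc n) t) (\<Phi> x t) = norm (\<Phi> (g n) t - \<Phi> x t)" by (simp add: gS dist_norm)
        also have "\<dots> \<le> K * integral {a..t} (\<lambda>r. norm (g n r - x r))" by (rule \<Phi>diff[OF gc xc t])
        also have "integral {a..t} (\<lambda>r. norm (g n r - x r)) \<le> integral {a..t} (\<lambda>r. e')"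
        proof (rule integral_le)
          show "(\<lambda>r. norm (g n r - x r)) integrable_on {a..t}"
            using t by (intro integrable_continuous_real continuous_intros continuous_on_subset[OF gc]
                continuous_on_subset[OF xc]) auto
          show "(\<lambda>r. e') integrable_on {a..t}" by (rule integrable_const_ivl)
          show "norm (g n r - x r) \<le> e'" if "r \<in> {a..t}" for r
            using elim that t by (auto simp: dist_norm less_imp_le)
        qed
        also have "integral {a..t} (\<lambda>r. e') = (t - a) * e'" using t by simp
        finally have "dist (g (Suc n) t) (\<Phi> x t) \<le> K * ((t - a) * e')" using K by (simp add: mult_left_mono)
        also have "\<dots> \<le> K * (b - a) * e'" using t K e' by (simp add: mult_left_mono mult_right_mono)
        also have "\<dots> < (K * (b - a) + 1) * e'" using e' by (simp add: distrib_right)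
        also have "\<dots> = e" unfolding e'_def using Kba by (simp add: field_simps)
        finally show ?case .
      qed
    qed
    show ?thesis using LIMSEQ_unique[OF l2 l1] .
  qed
  have xa: "x a = y" using fixp[of a] ab by (simp add: \<Phi>_def)
  have "vc T (\<lambda>r. G r (x r)) a b x"
    unfolding vc_def
  proof (intro conjI ballI)
    show "(\<lambda>r. T (-r) (G r (x r))) integrable_on {a..b}" by (rule I[OF xc])
    fix t assume t: "t \<in> {a..b}"
    show "x t = T (t - a) (x a) + integral {a..t} (\<lambda>r. T (t - r) (G r (x r)))"
      using fixp[OF t] xa by (simp add: \<Phi>_def)
  qed
  then show ?thesis using xa by blast
qed

end

lemma idx_ex1:
  fixes g :: "nat \<Rightarrow> real"
  assumes g0: "g 0 = 0" and sm: "strict_mono g" and lim: "filterlim g at_top sequentially" and t: "0 \<le> t"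
  shows "\<exists>!k. g k \<le> t \<and> t < g (Suc k)"
proof -
  have "\<forall>\<^sub>F n in sequentially. t < g n" using lim by (simp add: filterlim_at_top_dense)
  then obtain n where n: "t < g n" by (auto simp: eventually_sequentially)
  define m where "m = (LEAST n. t < g n)"
  have m1: "t < g m" unfolding m_def using n by (rule LeastI)
  have m0: "m \<noteq> 0"
  proof
    assume "m = 0" with m1 g0 t show False by simp
  qed
  then obtain k where k: "m = Suc k" by (cases m) auto
  have "\<not> t < g k" unfolding m_def
  proof (rule not_less_Least)
    show "k < (LEAST n. t < g n)" using k unfolding m_def by simp
  qed
  then have ex: "g k \<le> t \<and> t < g (Suc k)" using m1 k by auto
  have "k1 = k2" if "g k1 \<le> t \<and> t < g (Suc k1)" "g k2 \<le> t \<and> t < g (Suc k2)" for k1 k2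
  proof (rule ccontr)
    assume "k1 \<noteq> k2"
    then consider "k1 < k2" | "k2 < k1" by linarith
    then show False
    proof cases
      case 1
      then have "g (Suc k1) \<le> g k2" using strict_mono_leD[OF sm, of "Suc k1" k2] by auto
      then show False using that by auto
    next
      case 2
      then have "g (Suc k2) \<le> g k1" using strict_mono_leD[OF sm, of "Suc k2" k1] by auto
      then show False using that by auto
    qed
  qed
  then show ?thesis using ex by blast
qed

lemma seq_above:
  fixes g :: "nat \<Rightarrow> real"
  assumes lim: "filterlim g at_top sequentially"
  shows "\<exists>n. b \<le> g n"
proof -
  have "\<forall>\<^sub>F n in sequentially. b < g n" using lim by (simp add: filterlim_at_top_dense)
  then obtain n where "b < g n" by (auto simp: eventually_sequentially)
  then show ?thesis by (auto intro: less_imp_le)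
qed

lemma int_degen:
  fixes f :: "real \<Rightarrow> 'b::banach"
  assumes "c \<le> a"
  shows "f integrable_on {a..c}"
proof -
  have "Henstock_Kurzweil_Integration.content (cbox a c) = 0" using assms by simp
  then show ?thesis by (metis integrable_on_null box_real(2))
qed

lemma sw_piece:
  fixes H :: "'q \<Rightarrow> real \<Rightarrow> 'b::banach"
  assumes sw: "switching_seq \<sigma> ts" and H: "\<And>q. continuous_on {u..v} (H q)"
    and sub: "{u..v} \<subseteq> {ts n..ts (Suc n)}"
  shows "(\<lambda>r. H (\<sigma> r) r) integrable_on {u..v}"
proof (rule integrable_spike_finite[where S="{ts (Suc n)}" and f="H (\<sigma> (ts n))"])
  show "H (\<sigma> (ts n)) integrable_on {u..v}" by (rule integrable_continuous_real[OF H])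
  fix r assume r: "r \<in> {u..v} - {ts (Suc n)}"
  then have "r \<in> {ts n..<ts (Suc n)}" using sub by auto
  then have "\<sigma> r = \<sigma> (ts n)" using sw unfolding switching_seq_def by blast
  then show "H (\<sigma> r) r = H (\<sigma> (ts n)) r" by simp
qed auto

lemma sw_integrable:
  fixes H :: "'q \<Rightarrow> real \<Rightarrow> 'b::banach"
  assumes sw: "switching_seq \<sigma> ts" and a: "0 \<le> a" and H: "\<And>q. continuous_on {a..b} (H q)"
  shows "(\<lambda>r. H (\<sigma> r) r) integrable_on {a..b}"
proof -
  have ts0: "ts 0 = 0" and sm: "strict_mono ts" and lim: "filterlim ts at_top sequentially"
    using sw unfolding switching_seq_def by auto
  have mono: "ts n \<le> ts (Suc n)" for n using strict_mono_leD[OF sm] by auto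
  have "(\<lambda>r. H (\<sigma> r) r) integrable_on {a..min b (ts n)}" for n
  proof (induction n)
    case 0
    show ?case using a ts0 by (intro int_degen) simp
  next
    case (Suc n)
    define c where "c = min b (ts n)"
    define c' where "c' = min b (ts (Suc n))"
    have cc': "c \<le> c'" using mono[of n] by (simp add: c_def c'_def)
    have piece: "(\<lambda>r. H (\<sigma> r) r) integrable_on {u..v}"
      if A: "{u..v} \<subseteq> {ts n..ts (Suc n)}" and B: "{u..v} \<subseteq> {a..b}" for u v
      by (rule sw_piece[OF sw _ A], rule continuous_on_subset[OF H B])
    have "(\<lambda>r. H (\<sigma> r) r) integrable_on {a..c'}"
    proof (cases "c' \<le> a")
      case True
      then show ?thesis by (rule int_degen)
    next
      case False
      show ?thesis
      proof (cases "c < a")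
        case True
        then have "ts n < a" using False by (auto simp: c_def c'_def)
        then have "{a..c'} \<subseteq> {ts n..ts (Suc n)}" by (auto simp: c'_def)
        moreover have "{a..c'} \<subseteq> {a..b}" by (auto simp: c'_def)
        ultimately show ?thesis by (rule piece)
      next
        case cF: False
        have i1: "(\<lambda>r. H (\<sigma> r) r) integrable_on {a..c}" using Suc.IH by (simp add: c_def)
        have i2: "(\<lambda>r. H (\<sigma> r) r) integrable_on {c..c'}"
        proof (cases "b \<le> ts n")
          case True
          then have "c = c'" using mono[of n] by (auto simp: c_def c'_def)
          then show ?thesis by (intro int_degen) simp
        next
          case bF: False
          then have "c = ts n" by (simp add: c_def)
          then have "{c..c'} \<subseteq> {ts n..ts (Suc n)}" by (auto simp: c'_def)
          moreover have "{c..c'} \<subseteq> {a..b}" using cF by (auto simp: c_def c'_def)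
          ultimately show ?thesis by (rule piece)
        qed
        show ?thesis
          by (rule Henstock_Kurzweil_Integration.integrable_combine[OF _ cc' i1 i2]) (use cF in auto)
      qed
    qed
    then show ?case by (simp add: c'_def)
  qed
  note all = this
  obtain n where "b \<le> ts n" using seq_above[OF lim] by blast
  then have "min b (ts n) = b" by simp
  then show ?thesis using all[of n] by simp
qed

lemma glue_cont:
  fixes w :: "real \<Rightarrow> 'a::topological_space"
  assumes "\<And>c. 0 \<le> c \<Longrightarrow> continuous_on {0..c} w"
  shows "continuous_on {0..} w"
  unfolding continuous_on_eq_continuous_within
proof
  fix t :: real assume t: "t \<in> {0..}"
  have "continuous (at t within {0..t+1}) w"
    using assms[of "t + 1"] t by (auto simp: continuous_on_eq_continuous_within)
  moreover have "at t within {0..t+1} = at t within {0..}"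
    by (rule at_within_nhd[of _ "{..<t+1}"]) auto
  ultimately show "continuous (at t within {0..}) w" by simp
qed

locale sys = c0g T for T :: "real \<Rightarrow> 'x::banach \<Rightarrow> 'x" +
  fixes f :: "'q \<Rightarrow> 'x \<times> 'u::banach \<Rightarrow> 'x" and K :: "'x \<Rightarrow> 'u" and Lf LK :: real
  assumes Lf: "Lf > 0" and flip: "\<And>q. Lf-lipschitz_on UNIV (f q)" and f0: "\<And>q. f q (0, 0) = 0"
    and Klip: "LK-lipschitz_on UNIV K" and K0: "K 0 = 0"
begin

lemma LK: "LK \<ge> 0" using Klip by (rule lipschitz_on_nonneg)

lemma f_lip: "norm (f q (w1, u1) - f q (w2, u2)) \<le> Lf * (norm (w1 - w2) + norm (u1 - u2))"
proof -
  have "dist (f q (w1, u1)) (f q (w2, u2)) \<le> Lf * dist (w1, u1) (w2, u2)"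
    by (rule lipschitz_onD[OF flip]) auto
  also have "dist (w1, u1) (w2, u2) = norm (w1 - w2, u1 - u2)" by (simp add: dist_norm)
  also have "Lf * \<dots> \<le> Lf * (norm (w1 - w2) + norm (u1 - u2))"
    using Lf norm_Pair_le by (intro mult_left_mono) auto
  finally show ?thesis by (simp add: dist_norm)
qed

lemma K_lip: "norm (K v1 - K v2) \<le> LK * norm (v1 - v2)"
  using lipschitz_onD[OF Klip, of v1 v2] by (simp add: dist_norm)

lemma f_bound: "norm (f q (w, u)) \<le> Lf * (norm w + norm u)"
  using f_lip[of q w u 0 0] by (simp add: f0)

lemma K_bound: "norm (K v) \<le> LK * norm v"
  using K_lip[of v 0] by (simp add: K0)

lemma f_cont:
  assumes "continuous_on S h" "continuous_on S k"
  shows "continuous_on S (\<lambda>r. f q (h r, k r))"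
proof -
  have "continuous_on UNIV (f q)" by (rule lipschitz_on_continuous_on[OF flip])
  then show ?thesis
    by (rule continuous_on_compose2) (auto intro: continuous_intros assms)
qed

lemma K_cont:
  assumes "continuous_on S h"
  shows "continuous_on S (\<lambda>r. K (h r))"
proof -
  have "continuous_on UNIV K" by (rule lipschitz_on_continuous_on[OF Klip])
  then show ?thesis
    by (rule continuous_on_compose2) (auto intro: assms)
qed

lemma Gq_lip: "norm (f q (w1, K w1) - f q (w2, K w2)) \<le> (Lf * (1 + LK)) * norm (w1 - w2)"
proof -
  have "norm (f q (w1, K w1) - f q (w2, K w2)) \<le> Lf * (norm (w1 - w2) + norm (K w1 - K w2))"
    by (rule f_lip)
  also have "\<dots> \<le> Lf * (norm (w1 - w2) + LK * norm (w1 - w2))"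
    using Lf K_lip by (intro mult_left_mono add_left_mono) auto
  finally show ?thesis by (simp add: algebra_simps)
qed

lemma mild_vc:
  assumes m: "mild_sol T f K q y w" and b: "0 \<le> b"
  shows "vc T (\<lambda>r. f q (w r, K (w r))) 0 b w" and "w 0 = y"
proof -
  have cw: "continuous_on {0..} w" and eq: "\<And>t. t \<ge> 0 \<Longrightarrow> w t = T t y + integral {0..t} (\<lambda>r. T (t - r) (f q (w r, K (w r))))"
    using m unfolding mild_sol_def by auto
  show w0: "w 0 = y" using eq[of 0] by simp
  have cwb: "continuous_on {0..b} w" using cw by (rule continuous_on_subset) auto
  show "vc T (\<lambda>r. f q (w r, K (w r))) 0 b w"
    unfolding vc_def
  proof (intro conjI ballI)
    show "(\<lambda>r. T (-r) (f q (w r, K (w r)))) integrable_on {0..b}"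
      by (intro integrable_continuous_real Tjoint f_cont K_cont cwb continuous_intros)
    fix t assume "t \<in> {0..b}"
    then show "w t = T (t - 0) (w 0) + integral {0..t} (\<lambda>r. T (t - r) (f q (w r, K (w r))))"
      using eq[of t] w0 by simp
  qed
qed

lemma mild_unique:
  assumes m1: "mild_sol T f K q y w1" and m2: "mild_sol T f K q y w2" and t: "0 \<le> t"
  shows "w1 t = w2 t"
proof (rule vc_unique[OF mild_vc(1)[OF m1 t] mild_vc(1)[OF m2 t]])
  show "Lf * (1 + LK) \<ge> 0" using Lf LK by simp
  show "norm (f q (w1, K w1) - f q (w2, K w2)) \<le> (Lf * (1 + LK)) * norm (w1 - w2)" for r w1 w2
    by (rule Gq_lip)
  show "w1 0 = w2 0" using mild_vc(2)[OF m1 t] mild_vc(2)[OF m2 t] by simp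
qed (use t in auto)

lemma mild_exists: "\<exists>w. mild_sol T f K q y w \<and> (\<forall>r<0. w r = 0)"
proof -
  have "\<exists>x. x 0 = y \<and> vc T (\<lambda>r. f q (x r, K (x r))) 0 (real n) x" for n
  proof (rule vc_exists)
    show "Lf * (1 + LK) \<ge> 0" using Lf LK by simp
    show "norm (f q (w1, K w1) - f q (w2, K w2)) \<le> (Lf * (1 + LK)) * norm (w1 - w2)" for r w1 w2
      by (rule Gq_lip)
    show "(\<lambda>r. T (-r) (f q (w r, K (w r)))) integrable_on {0..real n}" if "continuous_on {0..real n} w" for w
      by (intro integrable_continuous_real Tjoint f_cont K_cont that continuous_intros)
  qed auto
  then obtain W where W: "\<And>n. W n 0 = y" "\<And>n. vc T (\<lambda>r. f q (W n r, K (W n r))) 0 (real n) (W n)"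
    by metis
  have agree: "W n t = W m t" if "0 \<le> t" "t \<le> real n" "t \<le> real m" for n m t
  proof (rule vc_unique)
    show "vc T (\<lambda>r. f q (W n r, K (W n r))) 0 t (W n)" by (rule vc_mono[OF W(2)]) (use that in auto)
    show "vc T (\<lambda>r. f q (W m r, K (W m r))) 0 t (W m)" by (rule vc_mono[OF W(2)]) (use that in auto)
    show "Lf * (1 + LK) \<ge> 0" using Lf LK by simp
    show "norm (f q (w1, K w1) - f q (w2, K w2)) \<le> (Lf * (1 + LK)) * norm (w1 - w2)" for r w1 w2
      by (rule Gq_lip)
  qed (use that W(1) in auto)
  define w where "w t = (if t < 0 then 0 else W (nat \<lceil>t\<rceil>) t)" for t
  have wW: "w t = W n t" if "0 \<le> t" "t \<le> real n" for t n
    using agree[of t "nat \<lceil>t\<rceil>" n] that unfolding w_def by (simp add: real_nat_ceiling_ge)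
  have cont: "continuous_on {0..} w"
  proof (rule glue_cont)
    fix c :: real assume c: "0 \<le> c"
    have "continuous_on {0..c} (W (nat \<lceil>c\<rceil>))"
      using vc_cont[OF W(2)] by (rule continuous_on_subset) (use real_nat_ceiling_ge in auto)
    then show "continuous_on {0..c} w"
    proof (rule continuous_on_eq)
      fix x assume "x \<in> {0..c}"
      then show "W (nat \<lceil>c\<rceil>) x = w x" using wW[of x "nat \<lceil>c\<rceil>"] real_nat_ceiling_ge[of c] le_of_int_ceiling[of c] by force
    qed
  qed
  have "mild_sol T f K q y w"
    unfolding mild_sol_def
  proof (intro conjI allI impI cont)
    fix t :: real assume t: "0 \<le> t"
    define n where "n = nat \<lceil>t\<rceil>"
    have tn: "t \<le> real n" unfolding n_def by (rule real_nat_ceiling_ge)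
    have "W n t = T (t - 0) (W n 0) + integral {0..t} (\<lambda>r. T (t - r) (f q (W n r, K (W n r))))"
    proof -
      have "t \<in> {0..real n}" using t tn by auto
      then show ?thesis using W(2)[of n] unfolding vc_def by blast
    qed
    also have "integral {0..t} (\<lambda>r. T (t - r) (f q (W n r, K (W n r)))) = integral {0..t} (\<lambda>r. T (t - r) (f q (w r, K (w r))))"
    proof (rule integral_cong)
      fix r assume "r \<in> {0..t}"
      then have "w r = W n r" using wW[of r n] tn by auto
      then show "T (t - r) (f q (W n r, K (W n r))) = T (t - r) (f q (w r, K (w r)))" by simp
    qed
    finally show "w t = T t y + integral {0..t} (\<lambda>r. T (t - r) (f q (w r, K (w r))))"
      using wW[OF t tn] W(1) by simp
  qed
  moreover have "\<forall>r<0. w r = 0" by (simp add: w_def)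
  ultimately show ?thesis by blast
qed

lemma Tq_eq:
  assumes m: "mild_sol T f K q y w" and t: "0 \<le> t"
  shows "Tq T f K q t y = w t"
proof -
  have ex1: "\<exists>!w. mild_sol T f K q y w \<and> (\<forall>r<0. w r = 0)"
  proof -
    obtain w0 where w0: "mild_sol T f K q y w0 \<and> (\<forall>r<0. w0 r = 0)" using mild_exists by blast
    have "w' = w0" if "mild_sol T f K q y w' \<and> (\<forall>r<0. w' r = 0)" for w'
    proof
      fix r show "w' r = w0 r"
        using mild_unique[of q y w' w0 r] that w0 by (cases "r < 0") auto
    qed
    then show ?thesis using w0 by blast
  qed
  have "mild_sol T f K q y (THE w. mild_sol T f K q y w \<and> (\<forall>r<0. w r = 0))"
    using theI'[OF ex1] by blast
  then show ?thesis unfolding Tq_def using mild_unique[OF _ m t] by blast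
qed

lemma Tq_exists: "\<exists>w. mild_sol T f K q y w \<and> (\<forall>t\<ge>0. Tq T f K q t y = w t)"
  using mild_exists Tq_eq by blast

end

lemma sw_props:
  assumes "switching_seq \<sigma> ts"
  shows "ts 0 = 0" "strict_mono ts" "filterlim ts at_top sequentially"
    "\<And>k t. t \<in> {ts k..<ts (Suc k)} \<Longrightarrow> \<sigma> t = \<sigma> (ts k)"
  using assms unfolding switching_seq_def by auto

lemma PC_shift:
  assumes \<sigma>: "\<sigma> \<in> PC" and a: "0 \<le> a"
  shows "(\<lambda>t. \<sigma> (t + a)) \<in> PC"
proof -
  obtain ts where sw: "switching_seq \<sigma> ts" using \<sigma> unfolding PC_def by blast
  note P = sw_props[OF sw]
  obtain m where m: "ts m \<le> a" "a < ts (Suc m)" using idx_ex1[OF P(1) P(2) P(3) a] by blast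
  define ts' where "ts' n = (if n = 0 then 0 else ts (m + n) - a)" for n
  have mono: "ts i \<le> ts j" if "i \<le> j" for i j using strict_mono_leD[OF P(2) that] .
  have "switching_seq (\<lambda>t. \<sigma> (t + a)) ts'"
    unfolding switching_seq_def
  proof (intro conjI allI ballI)
    show "ts' 0 = 0" by (simp add: ts'_def)
    show "strict_mono ts'"
    proof (rule strict_mono_Suc_iff[THEN iffD2], intro allI)
      fix n
      show "ts' n < ts' (Suc n)"
      proof (cases "n = 0")
        case True then show ?thesis using m by (simp add: ts'_def)
      next
        case False
        have "ts (m + n) < ts (m + Suc n)" using P(2) by (simp add: strict_mono_def)
        then show ?thesis using False by (simp add: ts'_def)
      qed
    qed
    show "filterlim ts' at_top sequentially"
      unfolding filterlim_at_top_dense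
    proof
      fix Z :: real
      have "\<forall>\<^sub>F n in sequentially. Z + a < ts n" using P(3) by (simp add: filterlim_at_top_dense)
      then obtain N where N: "\<And>n. n \<ge> N \<Longrightarrow> Z + a < ts n" by (auto simp: eventually_sequentially)
      show "\<forall>\<^sub>F n in sequentially. Z < ts' n"
        unfolding eventually_sequentially
      proof (intro exI allI impI)
        fix n assume n: "Suc N \<le> n"
        then have "Z + a < ts n" using N by auto
        moreover have "ts n \<le> ts (m + n)" by (rule mono) simp
        ultimately show "Z < ts' n" using n by (simp add: ts'_def)
      qed
    qed
    fix k t assume t: "t \<in> {ts' k..<ts' (Suc k)}"
    show "\<sigma> (t + a) = \<sigma> (ts' k + a)"
    proof (cases "k = 0")
      case True
      then have "t + a \<in> {ts m..<ts (Suc m)}" using t m by (auto simp: ts'_def)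
      then have "\<sigma> (t + a) = \<sigma> (ts m)" by (rule P(4))
      moreover have "\<sigma> a = \<sigma> (ts m)" using m by (intro P(4)) auto
      ultimately show ?thesis using True by (simp add: ts'_def)
    next
      case False
      then have "t + a \<in> {ts (m + k)..<ts (Suc (m + k))}" using t by (auto simp: ts'_def)
      then have "\<sigma> (t + a) = \<sigma> (ts (m + k))" by (rule P(4))
      then show ?thesis using False by (simp add: ts'_def)
    qed
  qed
  then show ?thesis unfolding PC_def by blast
qed

context c0g begin

lemma vc_refl: "vc T F a a x"
  unfolding vc_def
proof (intro conjI ballI)
  show "(\<lambda>r. T (-r) (F r)) integrable_on {a..a}" by (rule int_degen) simp
  fix t assume "t \<in> {a..a}"
  then have "t = a" by simp
  then show "x t = T (t - a) (x a) + integral {a..t} (\<lambda>r. T (t - r) (F r))" by simp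
qed

end

context sys begin

lemma Tq_zero: "Tq T f K q 0 y = y"
proof -
  obtain w where w: "mild_sol T f K q y w" "\<forall>t\<ge>0. Tq T f K q t y = w t" using Tq_exists by blast
  then show ?thesis using mild_vc(2)[OF w(1), of 0] by simp
qed

lemma phi0_vc:
  assumes \<sigma>: "\<sigma> \<in> PC" and b: "0 \<le> b"
  shows "vc T (\<lambda>r. f (\<sigma> r) (phi0 T f K r y \<sigma>, K (phi0 T f K r y \<sigma>))) 0 b (\<lambda>t. phi0 T f K t y \<sigma>)"
    and "phi0 T f K 0 y \<sigma> = y"
proof -
  define ts where "ts = (SOME ts. switching_seq \<sigma> ts)"
  have sw: "switching_seq \<sigma> ts"
  proof -
    obtain ts0 where "switching_seq \<sigma> ts0" using \<sigma> unfolding PC_def by blast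
    then show ?thesis unfolding ts_def by (metis someI)
  qed
  note P = sw_props[OF sw]
  define z where "z t = phi0 T f K t y \<sigma>" for t
  define S where "S k = sw_state T f K \<sigma> ts y k" for k
  have mono: "ts i \<le> ts j" if "i \<le> j" for i j using strict_mono_leD[OF P(2) that] .
  have z_eq: "z t = Tq T f K (\<sigma> (ts k)) (t - ts k) (S k)" if "ts k \<le> t" "t < ts (Suc k)" for k t
  proof -
    have t0: "0 \<le> t" using that mono[of 0 k] P(1) by auto
    have "(THE k. ts k \<le> t \<and> t < ts (Suc k)) = k"
      using idx_ex1[OF P(1) P(2) P(3) t0] that by blast
    then show ?thesis unfolding z_def phi0_def S_def ts_def[symmetric] Let_def by simp
  qed
  have z0: "z 0 = y"
  proof -
    have "ts 0 < ts (Suc 0)" using P(2) by (simp add: strict_mono_def)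
    then have "ts 0 \<le> 0" "0 < ts (Suc 0)" using P(1) by auto
    then show ?thesis using z_eq[of 0 0] by (simp add: Tq_zero S_def P(1))
  qed
  then show "phi0 T f K 0 y \<sigma> = y" by (simp add: z_def)
  have piece: "vc T (\<lambda>r. f (\<sigma> r) (z r, K (z r))) (ts k) (ts (Suc k)) z" for k
  proof -
    obtain W where W: "mild_sol T f K (\<sigma> (ts k)) (S k) W" "\<forall>t\<ge>0. Tq T f K (\<sigma> (ts k)) t (S k) = W t"
      using Tq_exists by blast
    have len: "0 \<le> ts (Suc k) - ts k" using mono[of k "Suc k"] by simp
    have v: "vc T (\<lambda>r. f (\<sigma> (ts k)) (W r, K (W r))) 0 (ts (Suc k) - ts k) W"
      by (rule mild_vc(1)[OF W(1) len])
    have v2: "vc T (\<lambda>r. f (\<sigma> (ts k)) (W (r - ts k), K (W (r - ts k)))) (ts k) (ts (Suc k)) (\<lambda>t. W (t - ts k))"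
      using vc_shift[OF v, of "ts k"] by simp
    have zW: "z t = W (t - ts k)" if t: "t \<in> {ts k..ts (Suc k)}" for t
    proof (cases "t < ts (Suc k)")
      case True
      then show ?thesis using z_eq[of k t] t W(2) by auto
    next
      case False
      then have t1: "t = ts (Suc k)" using t by auto
      have "ts (Suc k) < ts (Suc (Suc k))" using P(2) by (simp add: strict_mono_def)
      then have "z t = Tq T f K (\<sigma> (ts (Suc k))) 0 (S (Suc k))" using z_eq[of "Suc k" t] t1 by simp
      also have "\<dots> = S (Suc k)" by (rule Tq_zero)
      also have "\<dots> = Tq T f K (\<sigma> (ts k)) (ts (Suc k) - ts k) (S k)" by (simp add: S_def)
      also have "\<dots> = W (t - ts k)" using W(2) len t1 by simp
      finally show ?thesis .
    qed
    show ?thesis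
    proof (rule vc_congr[OF v2])
      fix r assume r: "r \<in> {ts k..<ts (Suc k)}"
      then have "\<sigma> r = \<sigma> (ts k)" by (rule P(4))
      moreover have "z r = W (r - ts k)" using zW r by auto
      ultimately show "f (\<sigma> (ts k)) (W (r - ts k), K (W (r - ts k))) = f (\<sigma> r) (z r, K (z r))" by simp
    next
      fix r assume "r \<in> {ts k..ts (Suc k)}"
      then show "W (r - ts k) = z r" using zW by simp
    qed
  qed
  have all: "vc T (\<lambda>r. f (\<sigma> r) (z r, K (z r))) 0 (ts n) z" for n
  proof (induction n)
    case 0 then show ?case using P(1) vc_refl by simp
  next
    case (Suc n)
    show ?case by (rule vc_join[OF Suc piece]) (use mono[of 0 n] mono[of n "Suc n"] P(1) in auto)
  qed
  obtain n where "b \<le> ts n" using seq_above[OF P(3)] by blast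
  then have "vc T (\<lambda>r. f (\<sigma> r) (z r, K (z r))) 0 b z" by (rule vc_mono[OF all])
  then show "vc T (\<lambda>r. f (\<sigma> r) (phi0 T f K r y \<sigma>, K (phi0 T f K r y \<sigma>))) 0 b (\<lambda>t. phi0 T f K t y \<sigma>)"
    by (simp add: z_def[abs_def])
qed

end

definition sidx :: "(nat \<Rightarrow> real) \<Rightarrow> real \<Rightarrow> nat" where
  "sidx s r = (THE k. s k \<le> r \<and> r < s (Suc k))"

lemma sp_props:
  assumes "sampling_seq s"
  shows "s 0 = 0" "strict_mono s" "filterlim s at_top sequentially"
    "\<And>i j. i \<le> j \<Longrightarrow> s i \<le> s j" "\<And>k. 0 \<le> s k" "\<And>k. s k < s (Suc k)"
proof -
  show s0: "s 0 = 0" and sm: "strict_mono s" and "filterlim s at_top sequentially"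
    using assms unfolding sampling_seq_def by auto
  show mono: "\<And>i j. i \<le> j \<Longrightarrow> s i \<le> s j" using strict_mono_leD[OF sm] by blast
  show "\<And>k. 0 \<le> s k" using mono[of 0] s0 by auto
  show "\<And>k. s k < s (Suc k)" using sm by (simp add: strict_mono_def)
qed

lemma sidx_eq:
  assumes "sampling_seq s" "s k \<le> t" "t < s (Suc k)"
  shows "sidx s t = k"
proof -
  note P = sp_props[OF assms(1)]
  have "0 \<le> t" using P(5)[of k] assms by linarith
  then show ?thesis unfolding sidx_def using idx_ex1[OF P(1) P(2) P(3)] assms(2,3) by blast
qed

lemma sidx_ex:
  assumes "sampling_seq s" "0 \<le> t"
  shows "s (sidx s t) \<le> t \<and> t < s (Suc (sidx s t))"
proof -
  note P = sp_props[OF assms(1)]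
  obtain k where "s k \<le> t \<and> t < s (Suc k)" using idx_ex1[OF P(1) P(2) P(3) assms(2)] by blast
  then show ?thesis using sidx_eq[OF assms(1)] by auto
qed

context sys begin

lemma sd_int:
  assumes sw: "switching_seq \<sigma> ts" and a: "0 \<le> a" and w: "continuous_on {a..b} w" and v: "continuous_on {a..b} v"
  shows "(\<lambda>r. T (-r) (f (\<sigma> r) (w r, K (v r)))) integrable_on {a..b}"
  by (rule sw_integrable[OF sw a, where H="\<lambda>q r. T (-r) (f q (w r, K (v r)))"])
     (intro Tjoint f_cont K_cont w v continuous_intros)

lemma sd_vc:
  assumes sd: "sd_sol T f K s x0 \<sigma> x" and sp: "sampling_seq s" and \<sigma>: "\<sigma> \<in> PC"
  shows "vc T (\<lambda>r. f (\<sigma> r) (x r, K (T (r - s k) (x (s k))))) (s k) (s (Suc k)) x"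
proof -
  note P = sp_props[OF sp]
  obtain ts where sw: "switching_seq \<sigma> ts" using \<sigma> unfolding PC_def by blast
  have xc0: "continuous_on {0..} x" using sd unfolding sd_sol_def by blast
  have xc: "continuous_on {s k..s (Suc k)} x" using xc0 by (rule continuous_on_subset) (use P(5)[of k] in auto)
  define F where "F r = f (\<sigma> r) (x r, K (T (r - s k) (x (s k))))" for r
  define G where "G r = T (-r) (F r)" for r
  have iG: "G integrable_on {s k..s (Suc k)}"
    unfolding G_def F_def
    by (rule sd_int[OF sw P(5) xc]) (intro Tjoint continuous_intros)
  define R where "R t = T (t - s k) (x (s k)) + T t (integral {s k..t} G)" for t
  have R_eq: "integral {s k..t} (\<lambda>r. T (t - r) (F r)) = T t (integral {s k..t} G)"
    if "t \<in> {s k..s (Suc k)}" for t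
  proof -
    have "G integrable_on {s k..t}" using iG that by (auto intro: integrable_subinterval_real)
    then show ?thesis unfolding G_def by (rule factor(2))
  qed
  have eqx: "x t = R t" if t: "t \<in> {s k..<s (Suc k)}" for t
  proof -
    have "x t = T (t - s k) (x (s k)) + integral {0..t - s k}
              (\<lambda>r. T (t - s k - r) (f (\<sigma> (r + s k)) (x (r + s k), K (T r (x (s k))))))"
      using sd t unfolding sd_sol_def by blast
    also have "(\<lambda>r. T (t - s k - r) (f (\<sigma> (r + s k)) (x (r + s k), K (T r (x (s k)))))) =
               (\<lambda>r. T (t - s k - r) (F (r + s k)))"
      by (simp add: F_def)
    also have "integral {0..t - s k} (\<lambda>r. T (t - s k - r) (F (r + s k))) = integral {s k..t} (\<lambda>r. T (t - r) (F r))"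
      by (rule shift_integral0)
    finally show ?thesis using R_eq[of t] t by (simp add: R_def)
  qed
  have Rc: "continuous_on {s k..s (Suc k)} R"
    unfolding R_def by (intro continuous_intros Tjoint indefinite_integral_continuous_1 iG)
  have eqx2: "x t = R t" if t: "t \<in> {s k..s (Suc k)}" for t
  proof -
    have "(\<lambda>t. x t - R t) t = 0"
    proof (rule continuous_constant_on_closure[where S="{s k..<s (Suc k)}"])
      show "continuous_on (closure {s k..<s (Suc k)}) (\<lambda>t. x t - R t)"
        using P(6)[of k] by (simp add: continuous_on_diff[OF xc Rc])
      show "t \<in> closure {s k..<s (Suc k)}" using P(6)[of k] t by simp
    qed (simp add: eqx)
    then show ?thesis by simp
  qed
  show ?thesis
    unfolding vc_def
  proof (intro conjI ballI)
    show "(\<lambda>r. T (-r) (f (\<sigma> r) (x r, K (T (r - s k) (x (s k)))))) integrable_on {s k..s (Suc k)}"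
      using iG unfolding G_def[abs_def] F_def[abs_def] .
    fix t assume t: "t \<in> {s k..s (Suc k)}"
    show "x t = T (t - s k) (x (s k)) + integral {s k..t} (\<lambda>r. T (t - r) (f (\<sigma> r) (x r, K (T (r - s k) (x (s k))))))"
      using eqx2[OF t] R_eq[OF t] by (simp add: R_def F_def)
  qed
qed

end

context sys begin

lemma f_lip1: "norm (f q (w1, u) - f q (w2, u)) \<le> Lf * norm (w1 - w2)"
  using f_lip[of q w1 u w2 u] by simp

lemma sd_unique:
  assumes sd1: "sd_sol T f K s x0 \<sigma> x1" and sd2: "sd_sol T f K s x0 \<sigma> x2"
    and sp: "sampling_seq s" and \<sigma>: "\<sigma> \<in> PC" and t: "0 \<le> t"
  shows "x1 t = x2 t"
proof -
  note P = sp_props[OF sp]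
  have U: "x1 r = x2 r" if eq: "x1 (s k) = x2 (s k)" and r: "r \<in> {s k..s (Suc k)}" for k r
  proof -
    have v1: "vc T (\<lambda>r. f (\<sigma> r) (x1 r, K (T (r - s k) (x1 (s k))))) (s k) (s (Suc k)) x1"
      by (rule sd_vc[OF sd1 sp \<sigma>])
    have v2: "vc T (\<lambda>r. f (\<sigma> r) (x2 r, K (T (r - s k) (x1 (s k))))) (s k) (s (Suc k)) x2"
      using sd_vc[OF sd2 sp \<sigma>, of k] eq by simp
    show ?thesis
    proof (rule vc_unique[where G="\<lambda>r w. f (\<sigma> r) (w, K (T (r - s k) (x1 (s k))))", OF v1 v2])
      show "Lf \<ge> 0" using Lf by simp
      show "norm (f (\<sigma> r) (w1, K (T (r - s k) (x1 (s k)))) - f (\<sigma> r) (w2, K (T (r - s k) (x1 (s k)))))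
            \<le> Lf * norm (w1 - w2)" for r w1 w2
        by (rule f_lip1)
    qed (use eq r in auto)
  qed
  have S: "x1 (s k) = x2 (s k)" for k
  proof (induction k)
    case 0 then show ?case using sd1 sd2 P(1) unfolding sd_sol_def by simp
  next
    case (Suc k) then show ?case using U[of k "s (Suc k)"] P(6)[of k] by simp
  qed
  have "s (sidx s t) \<le> t \<and> t < s (Suc (sidx s t))" by (rule sidx_ex[OF sp t])
  then show ?thesis using U[OF S[of "sidx s t"], of t] by auto
qed

lemma sd_exists:
  assumes sp: "sampling_seq s" and \<sigma>: "\<sigma> \<in> PC"
  shows "\<exists>x. sd_sol T f K s x0 \<sigma> x \<and> (\<forall>r<0. x r = 0)"
proof -
  note P = sp_props[OF sp]
  obtain ts where sw: "switching_seq \<sigma> ts" using \<sigma> unfolding PC_def by blast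
  have "\<exists>w. w (s k) = y \<and> vc T (\<lambda>r. f (\<sigma> r) (w r, K (T (r - s k) y))) (s k) (s (Suc k)) w" for k y
  proof (rule vc_exists[where G="\<lambda>r w. f (\<sigma> r) (w, K (T (r - s k) y))"])
    show "s k \<le> s (Suc k)" using P(6)[of k] by simp
    show "Lf \<ge> 0" using Lf by simp
    show "norm (f (\<sigma> r) (w1, K (T (r - s k) y)) - f (\<sigma> r) (w2, K (T (r - s k) y))) \<le> Lf * norm (w1 - w2)" for r w1 w2
      by (rule f_lip1)
    show "(\<lambda>r. T (-r) (f (\<sigma> r) (w r, K (T (r - s k) y)))) integrable_on {s k..s (Suc k)}"
      if "continuous_on {s k..s (Suc k)} w" for w
      by (rule sd_int[OF sw P(5) that]) (intro Tjoint continuous_intros)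
  qed
  then obtain Sol where Sol0: "\<And>k y. Sol k y (s k) = y"
    and SolV: "\<And>k y. vc T (\<lambda>r. f (\<sigma> r) (Sol k y r, K (T (r - s k) y))) (s k) (s (Suc k)) (Sol k y)"
    by metis
  define ys where "ys = rec_nat x0 (\<lambda>k y. Sol k y (s (Suc k)))"
  have ys0: "ys 0 = x0" and ysS: "\<And>k. ys (Suc k) = Sol k (ys k) (s (Suc k))" by (simp_all add: ys_def)
  define x where "x t = (if t < 0 then 0 else Sol (sidx s t) (ys (sidx s t)) t)" for t
  have xk: "x t = Sol k (ys k) t" if t: "t \<in> {s k..s (Suc k)}" for k t
  proof (cases "t < s (Suc k)")
    case True
    then have "sidx s t = k" using sidx_eq[OF sp] t by auto
    moreover have "\<not> t < 0" using t P(5)[of k] by auto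
    ultimately show ?thesis by (simp add: x_def)
  next
    case False
    then have t1: "t = s (Suc k)" using t by auto
    then have "sidx s t = Suc k" using sidx_eq[OF sp, of "Suc k" t] P(6)[of "Suc k"] by auto
    moreover have "\<not> t < 0" using t P(5)[of k] by auto
    ultimately have "x t = Sol (Suc k) (ys (Suc k)) (s (Suc k))" using t1 by (simp add: x_def)
    also have "\<dots> = ys (Suc k)" by (rule Sol0)
    also have "\<dots> = Sol k (ys k) t" using t1 by (simp add: ysS)
    finally show ?thesis .
  qed
  have xs: "x (s k) = ys k" for k using xk[of "s k" k] P(6)[of k] Sol0 by simp
  have vck: "vc T (\<lambda>r. f (\<sigma> r) (x r, K (T (r - s k) (x (s k))))) (s k) (s (Suc k)) x" for k
  proof (rule vc_congr[OF SolV[of k "ys k"]])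
    fix r assume "r \<in> {s k..<s (Suc k)}"
    then show "f (\<sigma> r) (Sol k (ys k) r, K (T (r - s k) (ys k))) = f (\<sigma> r) (x r, K (T (r - s k) (x (s k))))"
      using xk[of r k] by (simp add: xs)
  next
    fix r assume "r \<in> {s k..s (Suc k)}"
    then show "Sol k (ys k) r = x r" using xk by simp
  qed
  define Fx where "Fx r = f (\<sigma> r) (x r, K (T (r - s (sidx s r)) (x (s (sidx s r)))))" for r
  have vcF: "vc T Fx (s k) (s (Suc k)) x" for k
  proof (rule vc_congr[OF vck[of k]])
    fix r assume r: "r \<in> {s k..<s (Suc k)}"
    then have "sidx s r = k" using sidx_eq[OF sp] by auto
    then show "f (\<sigma> r) (x r, K (T (r - s k) (x (s k)))) = Fx r" by (simp add: Fx_def)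
  qed simp
  have vc0: "vc T Fx 0 (s n) x" for n
  proof (induction n)
    case 0 then show ?case using P(1) vc_refl by simp
  next
    case (Suc n)
    show ?case by (rule vc_join[OF Suc vcF]) (use P(5)[of n] P(6)[of n] in auto)
  qed
  have cont: "continuous_on {0..} x"
  proof (rule glue_cont)
    fix c :: real assume "0 \<le> c"
    obtain n where "c \<le> s n" using seq_above[OF P(3)] by blast
    have "continuous_on {0..s n} x" by (rule vc_cont[OF vc0[of n]])
    then show "continuous_on {0..c} x" by (rule continuous_on_subset) (use \<open>c \<le> s n\<close> in auto)
  qed
  have "sd_sol T f K s x0 \<sigma> x"
    unfolding sd_sol_def
  proof (intro conjI allI ballI cont)
    show "x 0 = x0" using xs[of 0] P(1) ys0 by simp
    fix k t assume t: "t \<in> {s k..<s (Suc k)}"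
    define F where "F r = f (\<sigma> r) (x r, K (T (r - s k) (x (s k))))" for r
    have "x t = T (t - s k) (x (s k)) + integral {s k..t} (\<lambda>r. T (t - r) (F r))"
    proof -
      have "t \<in> {s k..s (Suc k)}" using t by auto
      then show ?thesis using vck[of k] unfolding vc_def F_def by blast
    qed
    also have "integral {s k..t} (\<lambda>r. T (t - r) (F r)) = integral {0..t - s k} (\<lambda>r. T (t - s k - r) (F (r + s k)))"
      by (rule shift_integral0[symmetric])
    also have "(\<lambda>r. T (t - s k - r) (F (r + s k))) =
        (\<lambda>r. T (t - s k - r) (f (\<sigma> (r + s k)) (x (r + s k), K (T r (x (s k))))))"
      by (simp add: F_def)
    finally show "x t = T (t - s k) (x (s k)) + integral {0..t - s k}
        (\<lambda>r. T (t - s k - r) (f (\<sigma> (r + s k)) (x (r + s k), K (T r (x (s k))))))" .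
  qed
  moreover have "\<forall>r<0. x r = 0" by (simp add: x_def)
  ultimately show ?thesis by blast
qed

lemma phiS_eq:
  assumes sd: "sd_sol T f K s x0 \<sigma> x" and sp: "sampling_seq s" and \<sigma>: "\<sigma> \<in> PC" and t: "0 \<le> t"
  shows "phiS T f K s t x0 \<sigma> = x t"
proof -
  have ex1: "\<exists>!w. sd_sol T f K s x0 \<sigma> w \<and> (\<forall>r<0. w r = 0)"
  proof -
    obtain w0 where w0: "sd_sol T f K s x0 \<sigma> w0 \<and> (\<forall>r<0. w0 r = 0)" using sd_exists[OF sp \<sigma>] by blast
    have "w' = w0" if "sd_sol T f K s x0 \<sigma> w' \<and> (\<forall>r<0. w' r = 0)" for w'
    proof
      fix r show "w' r = w0 r"
        using sd_unique[of s x0 \<sigma> w' w0 r] that w0 sp \<sigma> by (cases "r < 0") auto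
    qed
    then show ?thesis using w0 by blast
  qed
  have "sd_sol T f K s x0 \<sigma> (THE w. sd_sol T f K s x0 \<sigma> w \<and> (\<forall>r<0. w r = 0))"
    using theI'[OF ex1] by blast
  then show ?thesis unfolding phiS_def using sd_unique[OF _ sd sp \<sigma> t] by blast
qed

lemma sd_vc_global:
  assumes sd: "sd_sol T f K s x0 \<sigma> x" and sp: "sampling_seq s" and \<sigma>: "\<sigma> \<in> PC"
  shows "vc T (\<lambda>r. f (\<sigma> r) (x r, K (T (r - s (sidx s r)) (x (s (sidx s r)))))) 0 (s n) x"
proof -
  note P = sp_props[OF sp]
  define Fx where "Fx r = f (\<sigma> r) (x r, K (T (r - s (sidx s r)) (x (s (sidx s r)))))" for r
  have vcF: "vc T Fx (s k) (s (Suc k)) x" for k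
  proof (rule vc_congr[OF sd_vc[OF sd sp \<sigma>, of k]])
    fix r assume r: "r \<in> {s k..<s (Suc k)}"
    then have "sidx s r = k" using sidx_eq[OF sp] by auto
    then show "f (\<sigma> r) (x r, K (T (r - s k) (x (s k)))) = Fx r" by (simp add: Fx_def)
  qed simp
  have "vc T Fx 0 (s n) x"
  proof (induction n)
    case 0 then show ?case using P(1) vc_refl by simp
  next
    case (Suc n)
    show ?case by (rule vc_join[OF Suc vcF]) (use P(5)[of n] P(6)[of n] in auto)
  qed
  then show ?thesis unfolding Fx_def[abs_def] .
qed

end

context sys begin

lemma window:
  fixes x z :: "real \<Rightarrow> 'x" and u :: "real \<Rightarrow> 'u"
  assumes ae: "a \<le> e"
    and C: "C \<ge> 1" "\<And>s v. s \<in> {0..e - a} \<Longrightarrow> norm (T s v) \<le> C * norm v"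
    and vx: "vc T (\<lambda>r. f (\<sigma> r) (x r, u r)) a e x"
    and vz: "vc T (\<lambda>r. f (\<sigma> r) (z r, K (z r))) a e z"
    and z0: "z a = x a"
    and zb: "\<And>r. r \<in> {a..e} \<Longrightarrow> norm (z r) \<le> M * norm (x a)"
    and ub: "\<And>X r. (\<forall>\<rho>\<in>{a..e}. norm (x \<rho>) \<le> X) \<Longrightarrow> r \<in> {a..e} \<Longrightarrow> norm (u r - K (x r)) \<le> \<eta> * X"
    and eta: "\<eta> \<ge> 0"
    and Gam: "C * Lf * (e - a) * exp (C * Lf * (1 + LK) * (e - a)) \<le> \<Gamma>" and Geta: "\<Gamma> * \<eta> \<le> 1 / 2"
  shows "\<And>r. r \<in> {a..e} \<Longrightarrow> norm (x r) \<le> 2 * M * norm (x a)"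
    and "\<And>r. r \<in> {a..e} \<Longrightarrow> norm (x r - z r) \<le> 2 * \<Gamma> * \<eta> * M * norm (x a)"
proof -
  have xc: "continuous_on {a..e} x" by (rule vc_cont[OF vx])
  have zc: "continuous_on {a..e} z" by (rule vc_cont[OF vz])
  have nxc: "continuous_on {a..e} (\<lambda>r. norm (x r))" by (intro continuous_intros xc)
  obtain r0 where r0: "r0 \<in> {a..e}" "\<And>r. r \<in> {a..e} \<Longrightarrow> norm (x r) \<le> norm (x r0)"
    using continuous_attains_sup[OF compact_Icc _ nxc] ae by auto
  define Xs where "Xs = norm (x r0)"
  have Xs0: "Xs \<ge> 0" by (simp add: Xs_def)
  have xX: "\<forall>\<rho>\<in>{a..e}. norm (x \<rho>) \<le> Xs" using r0 by (auto simp: Xs_def)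
  define \<phi> where "\<phi> r = norm (x r - z r)" for r
  have c\<phi>: "continuous_on {a..e} \<phi>" unfolding \<phi>_def by (intro continuous_intros xc zc)
  define A where "A = C * Lf * (1 + LK)"
  define \<alpha> where "\<alpha> = C * Lf * \<eta> * Xs * (e - a)"
  have A0: "A \<ge> 0" using C Lf LK by (simp add: A_def)
  have le: "\<phi> t \<le> \<alpha> + A * integral {a..t} \<phi>" if t: "t \<in> {a..e}" for t
  proof -
    have "x t - z t = integral {a..t} (\<lambda>r. T (t - r) (f (\<sigma> r) (x r, u r) - f (\<sigma> r) (z r, K (z r))))"
      using vc_diff(1)[OF vx vz t] z0 by simp
    then have "\<phi> t = norm (integral {a..t} (\<lambda>r. T (t - r) (f (\<sigma> r) (x r, u r) - f (\<sigma> r) (z r, K (z r)))))"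
      by (simp add: \<phi>_def)
    also have "\<dots> \<le> C * integral {a..t} (\<lambda>r. Lf * (1 + LK) * \<phi> r + Lf * \<eta> * Xs)"
    proof (rule int_bound)
      show "(\<lambda>r. T (-r) (f (\<sigma> r) (x r, u r) - f (\<sigma> r) (z r, K (z r)))) integrable_on {a..t}"
        by (rule vc_diff(2)[OF vx vz t])
      show "(\<lambda>r. Lf * (1 + LK) * \<phi> r + Lf * \<eta> * Xs) integrable_on {a..t}"
        using t by (intro integrable_continuous_real continuous_intros continuous_on_subset[OF c\<phi>]) auto
      fix r assume r: "r \<in> {a..t}"
      then have rae: "r \<in> {a..e}" using t by auto
      have "norm (f (\<sigma> r) (x r, u r) - f (\<sigma> r) (z r, K (z r))) \<le> Lf * (norm (x r - z r) + norm (u r - K (z r)))"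
        by (rule f_lip)
      also have "norm (u r - K (z r)) \<le> norm (u r - K (x r)) + norm (K (x r) - K (z r))"
        by (rule norm_diff_triangle_le[where y="K (x r)"]) simp_all
      also have "norm (u r - K (x r)) \<le> \<eta> * Xs" by (rule ub[OF xX rae])
      also have "norm (K (x r) - K (z r)) \<le> LK * norm (x r - z r)" by (rule K_lip)
      finally have "norm (f (\<sigma> r) (x r, u r) - f (\<sigma> r) (z r, K (z r))) \<le> Lf * (norm (x r - z r) + (\<eta> * Xs + LK * norm (x r - z r)))"
        using Lf by (simp add: mult_left_mono)
      then show "norm (f (\<sigma> r) (x r, u r) - f (\<sigma> r) (z r, K (z r))) \<le> Lf * (1 + LK) * \<phi> r + Lf * \<eta> * Xs"
        by (simp add: \<phi>_def algebra_simps)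
    next
      show "C \<ge> 0" using C by simp
      fix s v assume "s \<in> {0..t - a}"
      then show "norm (T s v) \<le> C * norm v" using C(2)[of s v] t by auto
    qed
    also have "integral {a..t} (\<lambda>r. Lf * (1 + LK) * \<phi> r + Lf * \<eta> * Xs) =
               Lf * (1 + LK) * integral {a..t} \<phi> + Lf * \<eta> * Xs * (t - a)"
    proof -
      have "\<phi> integrable_on {a..t}"
        using t by (intro integrable_continuous_real continuous_on_subset[OF c\<phi>]) auto
      then have "integral {a..t} (\<lambda>r. Lf * (1 + LK) * \<phi> r + Lf * \<eta> * Xs) =
          integral {a..t} (\<lambda>r. Lf * (1 + LK) * \<phi> r) + integral {a..t} (\<lambda>r. Lf * \<eta> * Xs)"
        by (intro integral_add integrable_on_mult_right) auto
      then show ?thesis using t by simp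
    qed
    also have "C * (Lf * (1 + LK) * integral {a..t} \<phi> + Lf * \<eta> * Xs * (t - a)) \<le> \<alpha> + A * integral {a..t} \<phi>"
    proof -
      have "C * Lf * \<eta> * Xs * (t - a) \<le> C * Lf * \<eta> * Xs * (e - a)"
        using t C Lf eta Xs0 by (intro mult_left_mono) auto
      then show ?thesis by (simp add: \<alpha>_def A_def algebra_simps)
    qed
    finally show ?thesis .
  qed
  have \<phi>b: "\<phi> t \<le> \<Gamma> * \<eta> * Xs" if t: "t \<in> {a..e}" for t
  proof -
    have "\<phi> t \<le> \<alpha> * exp (A * (t - a))" by (rule gronwall[OF c\<phi> A0 le t])
    also have "\<dots> \<le> \<alpha> * exp (A * (e - a))"
      using t A0 C Lf eta Xs0 ae by (auto simp: \<alpha>_def intro!: mult_left_mono mult_right_mono)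
    also have "\<dots> = (C * Lf * (e - a) * exp (C * Lf * (1 + LK) * (e - a))) * (\<eta> * Xs)"
      by (simp add: \<alpha>_def A_def)
    also have "\<dots> \<le> \<Gamma> * (\<eta> * Xs)" using Gam eta Xs0 by (intro mult_right_mono) auto
    finally show ?thesis by simp
  qed
  have "Xs \<le> norm (z r0) + \<phi> r0"
    unfolding Xs_def \<phi>_def using norm_triangle_ineq[of "z r0" "x r0 - z r0"] by simp
  also have "\<dots> \<le> M * norm (x a) + \<Gamma> * \<eta> * Xs" using zb[OF r0(1)] \<phi>b[OF r0(1)] by simp
  also have "\<Gamma> * \<eta> * Xs \<le> Xs / 2" using Geta Xs0 mult_right_mono[OF Geta Xs0] by simp
  finally have XsM: "Xs \<le> 2 * M * norm (x a)" by simp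
  show "norm (x r) \<le> 2 * M * norm (x a)" if "r \<in> {a..e}" for r
    using xX that XsM by force
  show "norm (x r - z r) \<le> 2 * \<Gamma> * \<eta> * M * norm (x a)" if r: "r \<in> {a..e}" for r
  proof -
    have G0: "\<Gamma> * \<eta> \<ge> 0"
    proof -
      have "0 \<le> C * Lf * (e - a) * exp (C * Lf * (1 + LK) * (e - a))" using C Lf ae by simp
      then have "\<Gamma> \<ge> 0" using Gam by linarith
      then show ?thesis using eta by simp
    qed
    have "norm (x r - z r) \<le> \<Gamma> * \<eta> * Xs" using \<phi>b[OF r] by (simp add: \<phi>_def)
    also have "\<dots> \<le> \<Gamma> * \<eta> * (2 * M * norm (x a))" using XsM G0 by (rule mult_left_mono)
    finally show ?thesis by (simp add: algebra_simps)
  qed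
qed

end

context sys begin

lemma samp_err:
  assumes sd: "sd_sol T f K s x0 \<sigma> x" and sp: "sampling_seq s" and \<sigma>: "\<sigma> \<in> PC"
    and C: "C \<ge> 1" "\<And>s' v. s' \<in> {0..e - a} \<Longrightarrow> norm (T s' v) \<le> C * norm v"
    and a: "a = s j" and r: "r \<in> {a..e}" and X: "\<forall>\<rho>\<in>{a..e}. norm (x \<rho>) \<le> X"
    and \<delta>: "\<And>k. s (Suc k) - s k \<le> \<delta>"
  shows "norm (K (T (r - s (sidx s r)) (x (s (sidx s r)))) - K (x r)) \<le> (LK * C * Lf * (1 + LK * C) * \<delta>) * X"
proof -
  note P = sp_props[OF sp]
  define i where "i = sidx s r"
  have r0: "0 \<le> r" using r a P(5)[of j] by auto
  have i: "s i \<le> r" "r < s (Suc i)" using sidx_ex[OF sp r0] by (auto simp: i_def)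
  have ji: "j \<le> i"
  proof (rule ccontr)
    assume "\<not> j \<le> i"
    then have "Suc i \<le> j" by simp
    then have "s (Suc i) \<le> s j" by (rule P(4))
    then show False using i r a by auto
  qed
  have asi: "a \<le> s i" using P(4)[OF ji] a by simp
  have X0: "X \<ge> 0" using X r by (meson atLeastAtMost_iff norm_ge_zero order_trans order_refl)
  have v: "vc T (\<lambda>\<rho>. f (\<sigma> \<rho>) (x \<rho>, K (T (\<rho> - s i) (x (s i))))) (s i) (s (Suc i)) x"
    by (rule sd_vc[OF sd sp \<sigma>])
  have "x r = T (r - s i) (x (s i)) + integral {s i..r} (\<lambda>\<rho>. T (r - \<rho>) (f (\<sigma> \<rho>) (x \<rho>, K (T (\<rho> - s i) (x (s i))))))"
  proof -
    have "r \<in> {s i..s (Suc i)}" using i by auto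
    then show ?thesis using v unfolding vc_def by blast
  qed
  then have "x r - T (r - s i) (x (s i)) = integral {s i..r} (\<lambda>\<rho>. T (r - \<rho>) (f (\<sigma> \<rho>) (x \<rho>, K (T (\<rho> - s i) (x (s i))))))"
    by simp
  then have "norm (x r - T (r - s i) (x (s i))) \<le> C * integral {s i..r} (\<lambda>\<rho>. Lf * (1 + LK * C) * X)"
  proof (simp only:, intro int_bound)
    show "(\<lambda>\<rho>. T (-\<rho>) (f (\<sigma> \<rho>) (x \<rho>, K (T (\<rho> - s i) (x (s i)))))) integrable_on {s i..r}"
      by (rule vc_integrable[OF v]) (use i in auto)
    show "(\<lambda>\<rho>. Lf * (1 + LK * C) * X) integrable_on {s i..r}" by (rule integrable_const_ivl)
    fix \<rho> assume \<rho>: "\<rho> \<in> {s i..r}"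
    then have \<rho>ae: "\<rho> \<in> {a..e}" using asi r by auto
    have si_ae: "s i \<in> {a..e}" using asi i r by auto
    have xsi: "norm (x (s i)) \<le> X" using X si_ae by auto
    have xr: "norm (x \<rho>) \<le> X" using X \<rho>ae by auto
    have Tb: "norm (T (\<rho> - s i) (x (s i))) \<le> C * norm (x (s i))"
      using C(2)[of "\<rho> - s i"] \<rho> asi r by auto
    also have "\<dots> \<le> C * X" using xsi C by (intro mult_left_mono) auto
    finally have Tb2: "norm (T (\<rho> - s i) (x (s i))) \<le> C * X" .
    have "norm (K (T (\<rho> - s i) (x (s i)))) \<le> LK * norm (T (\<rho> - s i) (x (s i)))" by (rule K_bound)
    also have "\<dots> \<le> LK * (C * X)" using Tb2 LK by (rule mult_left_mono)
    finally have Kb: "norm (K (T (\<rho> - s i) (x (s i)))) \<le> LK * (C * X)" .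
    have "norm (f (\<sigma> \<rho>) (x \<rho>, K (T (\<rho> - s i) (x (s i))))) \<le> Lf * (norm (x \<rho>) + norm (K (T (\<rho> - s i) (x (s i)))))"
      by (rule f_bound)
    also have "\<dots> \<le> Lf * (X + LK * (C * X))"
      using xr Kb Lf by (intro mult_left_mono add_mono) auto
    also have "\<dots> = Lf * (1 + LK * C) * X" by (simp add: algebra_simps)
    finally show "norm (f (\<sigma> \<rho>) (x \<rho>, K (T (\<rho> - s i) (x (s i))))) \<le> Lf * (1 + LK * C) * X" .
  next
    show "C \<ge> 0" using C by simp
    fix s' v assume "s' \<in> {0..r - s i}"
    then show "norm (T s' v) \<le> C * norm v" using C(2)[of s' v] asi r by auto
  qed
  also have "C * integral {s i..r} (\<lambda>\<rho>. Lf * (1 + LK * C) * X) = C * (Lf * (1 + LK * C) * X) * (r - s i)"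
    using i by simp
  also have "\<dots> \<le> C * (Lf * (1 + LK * C) * X) * \<delta>"
  proof (rule mult_left_mono)
    show "r - s i \<le> \<delta>" using \<delta>[of i] i by linarith
    show "0 \<le> C * (Lf * (1 + LK * C) * X)" using C Lf LK X0 by simp
  qed
  finally have E: "norm (x r - T (r - s i) (x (s i))) \<le> C * (Lf * (1 + LK * C) * X) * \<delta>" .
  have "norm (K (T (r - s i) (x (s i))) - K (x r)) \<le> LK * norm (T (r - s i) (x (s i)) - x r)" by (rule K_lip)
  also have "norm (T (r - s i) (x (s i)) - x r) = norm (x r - T (r - s i) (x (s i)))" by (rule norm_minus_commute)
  also have "LK * \<dots> \<le> LK * (C * (Lf * (1 + LK * C) * X) * \<delta>)" using E LK by (rule mult_left_mono)
  finally show ?thesis by (simp add: i_def algebra_simps)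
qed


lemma window_step:
  assumes sd: "sd_sol T f K s x0 \<sigma> x" and sp: "sampling_seq s" and \<sigma>: "\<sigma> \<in> PC"
    and UG: "\<And>t y \<sigma>'. 0 \<le> t \<Longrightarrow> \<sigma>' \<in> PC \<Longrightarrow> norm (phi0 T f K t y \<sigma>') \<le> M * exp (- lam * t) * norm y"
    and M: "M > 0" and lam: "lam > 0"
    and \<tau>: "\<tau> \<ge> 1" "M * exp (- lam * \<tau>) \<le> 1 / 4"
    and C: "C \<ge> 1" "\<And>s' v. s' \<in> {0..\<tau> + 1} \<Longrightarrow> norm (T s' v) \<le> C * norm v"
    and \<Gamma>: "C * Lf * (\<tau> + 1) * exp (C * Lf * (1 + LK) * (\<tau> + 1)) \<le> \<Gamma>"
    and \<delta>: "\<And>k. s (Suc k) - s k \<le> \<delta>"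
    and small1: "\<Gamma> * (LK * C * Lf * (1 + LK * C) * \<delta>) \<le> 1 / 2"
    and small2: "8 * \<Gamma> * (LK * C * Lf * (1 + LK * C) * \<delta>) * M \<le> 1"
    and ij: "s j + \<tau> \<le> s j'" "s j' \<le> s j + \<tau> + 1" "j \<le> j'"
  shows "\<And>r. r \<in> {s j..s j'} \<Longrightarrow> norm (x r) \<le> 2 * M * norm (x (s j))"
    and "norm (x (s j')) \<le> norm (x (s j)) / 2"
proof -
  note P = sp_props[OF sp]
  define a where "a = s j"
  define e where "e = s j'"
  define y where "y = x a"
  define \<eta> where "\<eta> = LK * C * Lf * (1 + LK * C) * \<delta>"
  have a0: "0 \<le> a" using P(5) by (simp add: a_def)
  have ae: "a \<le> e" "e - a \<le> \<tau> + 1" "\<tau> \<le> e - a" using ij \<tau> by (auto simp: a_def e_def)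
  have \<delta>0: "\<delta> \<ge> 0" using \<delta>[of 0] P(6)[of 0] by simp
  have \<eta>0: "\<eta> \<ge> 0" using LK C Lf \<delta>0 by (simp add: \<eta>_def)
  have \<sigma>a: "(\<lambda>t. \<sigma> (t + a)) \<in> PC" by (rule PC_shift[OF \<sigma> a0])
  define z where "z t = phi0 T f K (t - a) y (\<lambda>t. \<sigma> (t + a))" for t
  have vz0: "vc T (\<lambda>r. f (\<sigma> (r + a)) (phi0 T f K r y (\<lambda>t. \<sigma> (t + a)), K (phi0 T f K r y (\<lambda>t. \<sigma> (t + a)))))
      0 (e - a) (\<lambda>t. phi0 T f K t y (\<lambda>t. \<sigma> (t + a)))"
    using phi0_vc(1)[OF \<sigma>a, of "e - a" y] ae by simp
  have vz: "vc T (\<lambda>r. f (\<sigma> r) (z r, K (z r))) a e z"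
    using vc_shift[OF vz0, of a] by (simp add: z_def[abs_def])
  have z0: "z a = x a" using phi0_vc(2)[OF \<sigma>a, of 0 y] by (simp add: z_def y_def)
  have zb: "norm (z r) \<le> M * norm (x a)" if "r \<in> {a..e}" for r
  proof -
    have "norm (z r) \<le> M * exp (- lam * (r - a)) * norm y" unfolding z_def using UG[OF _ \<sigma>a] that by auto
    also have "\<dots> \<le> M * 1 * norm y"
      using that lam M by (intro mult_left_mono mult_right_mono) auto
    finally show ?thesis by (simp add: y_def)
  qed
  have ze: "norm (z e) \<le> norm y / 4"
  proof -
    have "norm (z e) \<le> M * exp (- lam * (e - a)) * norm y" unfolding z_def using UG[OF _ \<sigma>a] ae by auto
    also have "\<dots> \<le> M * exp (- lam * \<tau>) * norm y"
      using ae lam M by (intro mult_left_mono mult_right_mono) auto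
    also have "\<dots> \<le> 1 / 4 * norm y" using \<tau>(2) by (intro mult_right_mono) auto
    finally show ?thesis by simp
  qed
  have vx0: "vc T (\<lambda>r. f (\<sigma> r) (x r, K (T (r - s (sidx s r)) (x (s (sidx s r)))))) 0 e x"
    unfolding e_def by (rule sd_vc_global[OF sd sp \<sigma>])
  have vx: "vc T (\<lambda>r. f (\<sigma> r) (x r, K (T (r - s (sidx s r)) (x (s (sidx s r)))))) a e x"
    by (rule vc_sub[OF vx0 a0 ae(1)])
  have Cb: "norm (T s' v) \<le> C * norm v" if "s' \<in> {0..e - a}" for s' v
    using C(2)[of s' v] that ae by auto
  have Gam: "C * Lf * (e - a) * exp (C * Lf * (1 + LK) * (e - a)) \<le> \<Gamma>"
  proof -
    have "C * Lf * (e - a) * exp (C * Lf * (1 + LK) * (e - a)) \<le> C * Lf * (\<tau> + 1) * exp (C * Lf * (1 + LK) * (\<tau> + 1))"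
    proof (rule mult_mono)
      show "C * Lf * (e - a) \<le> C * Lf * (\<tau> + 1)" using C Lf ae by (intro mult_left_mono) auto
      show "exp (C * Lf * (1 + LK) * (e - a)) \<le> exp (C * Lf * (1 + LK) * (\<tau> + 1))"
        using C Lf LK ae by (simp add: mult_left_mono)
      show "0 \<le> C * Lf * (\<tau> + 1)" using C Lf \<tau> by simp
      show "0 \<le> exp (C * Lf * (1 + LK) * (e - a))" by simp
    qed
    then show ?thesis using \<Gamma> by linarith
  qed
  have ub: "norm (K (T (r - s (sidx s r)) (x (s (sidx s r)))) - K (x r)) \<le> \<eta> * X"
    if X: "\<forall>\<rho>\<in>{a..e}. norm (x \<rho>) \<le> X" and r: "r \<in> {a..e}" for X r
    unfolding \<eta>_def by (rule samp_err[OF sd sp \<sigma> C(1) Cb a_def r X \<delta>])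
  have Geta: "\<Gamma> * \<eta> \<le> 1 / 2" using small1 by (simp add: \<eta>_def)
  note W = window[OF ae(1) C(1) Cb vx vz z0 zb ub \<eta>0 Gam Geta]
  show "norm (x r) \<le> 2 * M * norm (x (s j))" if "r \<in> {s j..s j'}" for r
    using W(1)[of r] that by (simp add: a_def e_def)
  have "norm (x e) \<le> norm (z e) + norm (x e - z e)"
    using norm_triangle_ineq[of "z e" "x e - z e"] by simp
  also have "norm (x e - z e) \<le> 2 * \<Gamma> * \<eta> * M * norm (x a)" using W(2)[of e] ae by auto
  also have "2 * \<Gamma> * \<eta> * M * norm (x a) \<le> norm y / 4"
  proof -
    have "8 * \<Gamma> * \<eta> * M \<le> 1" using small2 by (simp add: \<eta>_def)
    then have "(8 * \<Gamma> * \<eta> * M) * norm y \<le> 1 * norm y" by (intro mult_right_mono) auto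
    then show ?thesis by (simp add: y_def)
  qed
  finally show "norm (x (s j')) \<le> norm (x (s j)) / 2" using ze by (simp add: e_def a_def y_def)
qed

end

lemma half_pow_exp:
  fixes W t :: real
  assumes W: "W > 0" and tn: "t \<le> (real n + 1) * W"
  shows "(1 / 2) ^ n \<le> 2 * exp (- (ln 2 / W) * t)"
proof -
  have "(2::real) ^ n = exp (real n * ln 2)" by (simp add: exp_of_nat_mult)
  then have "(1 / 2 :: real) ^ n = exp (- (real n * ln 2))" by (simp add: power_one_over exp_minus inverse_eq_divide)
  also have "\<dots> \<le> exp (ln 2 - (ln 2 / W) * t)"
  proof -
    have "t / W \<le> real n + 1" using tn W by (simp add: divide_le_eq)
    then have "ln 2 * (t / W) \<le> ln 2 * (real n + 1)" by (intro mult_left_mono) auto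
    then show ?thesis by (simp add: algebra_simps)
  qed
  also have "\<dots> = 2 * exp (- (ln 2 / W) * t)" by (simp add: exp_diff exp_minus field_simps)
  finally show ?thesis .
qed

context sys begin

lemma decay:
  assumes sd: "sd_sol T f K s x0 \<sigma> x" and sp: "sampling_seq s" and \<sigma>: "\<sigma> \<in> PC"
    and UG: "\<And>t y \<sigma>'. 0 \<le> t \<Longrightarrow> \<sigma>' \<in> PC \<Longrightarrow> norm (phi0 T f K t y \<sigma>') \<le> M * exp (- lam * t) * norm y"
    and M: "M > 0" and lam: "lam > 0"
    and \<tau>: "\<tau> \<ge> 1" "M * exp (- lam * \<tau>) \<le> 1 / 4"
    and C: "C \<ge> 1" "\<And>s' v. s' \<in> {0..\<tau> + 1} \<Longrightarrow> norm (T s' v) \<le> C * norm v"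
    and \<Gamma>: "C * Lf * (\<tau> + 1) * exp (C * Lf * (1 + LK) * (\<tau> + 1)) \<le> \<Gamma>"
    and \<delta>: "\<And>k. s (Suc k) - s k \<le> \<delta>" and \<delta>1: "\<delta> \<le> 1"
    and small1: "\<Gamma> * (LK * C * Lf * (1 + LK * C) * \<delta>) \<le> 1 / 2"
    and small2: "8 * \<Gamma> * (LK * C * Lf * (1 + LK * C) * \<delta>) * M \<le> 1"
    and t: "0 \<le> t"
  shows "norm (x t) \<le> 4 * M * exp (- (ln 2 / (\<tau> + 1)) * t) * norm x0"
proof -
  note P = sp_props[OF sp]
  note WS = window_step[OF sd sp \<sigma> UG M lam \<tau> C \<Gamma> \<delta> small1 small2]
  define nxt where "nxt j = (LEAST i. s j + \<tau> \<le> s i)" for j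
  have nxt: "s j + \<tau> \<le> s (nxt j) \<and> s (nxt j) \<le> s j + \<tau> + 1 \<and> j \<le> nxt j" for j
  proof -
    obtain i where "s j + \<tau> \<le> s i" using seq_above[OF P(3)] by blast
    then have n1: "s j + \<tau> \<le> s (nxt j)" unfolding nxt_def by (rule LeastI)
    have jn: "j < nxt j"
    proof (rule ccontr)
      assume "\<not> j < nxt j"
      then have "s (nxt j) \<le> s j" using P(4) by simp
      then show False using n1 \<tau> by simp
    qed
    then obtain m where m: "nxt j = Suc m" "j \<le> m" by (cases "nxt j") auto
    have "\<not> s j + \<tau> \<le> s m" unfolding nxt_def
      by (rule not_less_Least) (use m in \<open>simp add: nxt_def\<close>)
    then have "s (Suc m) \<le> s j + \<tau> + 1" using \<delta>[of m] \<delta>1 by linarith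
    then show ?thesis using n1 jn m by simp
  qed
  define J where "J = rec_nat 0 (\<lambda>_ j. nxt j)"
  have J0: "J 0 = 0" and JS: "\<And>n. J (Suc n) = nxt (J n)" by (simp_all add: J_def)
  define g where "g n = s (J n)" for n
  have g0: "g 0 = 0" using P(1) by (simp add: g_def J0)
  have gS: "g n + \<tau> \<le> g (Suc n)" "g (Suc n) \<le> g n + \<tau> + 1" for n
    using nxt[of "J n"] by (auto simp: g_def JS)
  have gmono: "strict_mono g"
    by (rule strict_mono_Suc_iff[THEN iffD2]) (use gS(1) \<tau> in \<open>smt (verit)\<close>)
  have glow: "real n \<le> g n" for n
  proof (induction n)
    case 0 then show ?case using g0 by simp
    case (Suc n) then show ?case using gS(1)[of n] \<tau> by simp
  qed
  have ghigh: "g n \<le> real n * (\<tau> + 1)" for n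
  proof (induction n)
    case 0 then show ?case using g0 by simp
  next
    case (Suc n) then show ?case using gS(2)[of n] by (simp add: algebra_simps)
  qed
  have glim: "filterlim g at_top sequentially"
    by (rule filterlim_at_top_mono[OF filterlim_real_sequentially]) (use glow in auto)
  have xg: "norm (x (g n)) \<le> (1 / 2) ^ n * norm x0" for n
  proof (induction n)
    case 0
    have "x 0 = x0" using sd unfolding sd_sol_def by blast
    then show ?case using g0 by simp
  next
    case (Suc n)
    have "norm (x (g (Suc n))) \<le> norm (x (g n)) / 2"
      unfolding g_def JS using WS(2)[of "J n" "nxt (J n)"] nxt[of "J n"] by auto
    also have "\<dots> \<le> (1 / 2) ^ n * norm x0 / 2" using Suc by simp
    finally show ?case by simp
  qed
  obtain n where n: "g n \<le> t" "t < g (Suc n)" using idx_ex1[OF g0 gmono glim t] by blast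
  have "norm (x t) \<le> 2 * M * norm (x (g n))"
    using WS(1)[of "J n" "nxt (J n)" t] nxt[of "J n"] n by (auto simp: g_def JS)
  also have "\<dots> \<le> 2 * M * ((1 / 2) ^ n * norm x0)" using xg[of n] M by (intro mult_left_mono) auto
  also have "(1 / 2 :: real) ^ n \<le> 2 * exp (- (ln 2 / (\<tau> + 1)) * t)"
  proof (rule half_pow_exp)
    show "\<tau> + 1 > 0" using \<tau> by simp
    show "t \<le> (real n + 1) * (\<tau> + 1)" using n(2) ghigh[of "Suc n"] by (simp add: algebra_simps)
  qed
  then have "2 * M * ((1 / 2) ^ n * norm x0) \<le> 2 * M * ((2 * exp (- (ln 2 / (\<tau> + 1)) * t)) * norm x0)"
    using M by (intro mult_left_mono mult_right_mono) auto
  finally show ?thesis by (simp add: algebra_simps)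
qed

end

theorem corollary2:
  fixes T :: "real \<Rightarrow> 'x::banach \<Rightarrow> 'x"
    and f :: "'q \<Rightarrow> 'x \<times> 'u::banach \<Rightarrow> 'x"
    and K :: "'x \<Rightarrow> 'u"
    and Lf :: real
  assumes "C0_group T"
    and "Lf > 0"
    and "\<And>q. Lf-lipschitz_on UNIV (f q)"
    and "\<And>q. f q (0, 0) = 0"
    and "\<exists>LK. LK-lipschitz_on UNIV K"
    and "K 0 = 0"
    and "UGES (phi0 T f K)"
  shows "\<exists>\<delta>s>0. \<forall>s. sampling_seq s \<and> bdd_above (range (\<lambda>k. s (Suc k) - s k)) \<and>
            (SUP k. s (Suc k) - s k) < \<delta>s \<longrightarrow> UGES (phiS T f K s)"
proof -
  obtain LK where LKl: "LK-lipschitz_on UNIV K" using assms(5) by blast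
  interpret sys T f K Lf LK
    by (unfold_locales) (use assms LKl in auto)
  obtain M lam where M: "M > 0" and lam: "lam > 0"
    and UGm: "\<forall>t\<ge>0. \<forall>x. \<forall>\<sigma>\<in>PC. norm (phi0 T f K t x \<sigma>) \<le> M * exp (- lam * t) * norm x"
    using assms(7) unfolding UGES_def by blast
  have UG: "norm (phi0 T f K t y \<sigma>') \<le> M * exp (- lam * t) * norm y" if "0 \<le> t" "\<sigma>' \<in> PC" for t y \<sigma>'
    using UGm that by blast
  define \<tau> where "\<tau> = max 1 (ln (4 * M) / lam)"
  have \<tau>1: "\<tau> \<ge> 1" by (simp add: \<tau>_def)
  have \<tau>2: "M * exp (- lam * \<tau>) \<le> 1 / 4"
  proof -
    have "ln (4 * M) / lam \<le> \<tau>" by (simp add: \<tau>_def)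
    then have "ln (4 * M) \<le> lam * \<tau>" using lam by (simp add: divide_le_eq mult.commute)
    then have "exp (- lam * \<tau>) \<le> exp (- ln (4 * M))" by simp
    also have "\<dots> = 1 / (4 * M)" using M by (simp add: exp_minus inverse_eq_divide)
    finally have "M * exp (- lam * \<tau>) \<le> M * (1 / (4 * M))" using M by (intro mult_left_mono) auto
    also have "\<dots> = 1 / 4" using M by simp
    finally show ?thesis .
  qed
  obtain C where C: "C \<ge> 1" "\<forall>t\<in>{0..\<tau> + 1}. \<forall>v. norm (T t v) \<le> C * norm v"
    using UBP1 by blast
  have Cb: "norm (T s' v) \<le> C * norm v" if "s' \<in> {0..\<tau> + 1}" for s' v using C(2) that by blast
  define \<Gamma> where "\<Gamma> = C * Lf * (\<tau> + 1) * exp (C * Lf * (1 + LK) * (\<tau> + 1))"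
  define D where "D = LK * C * Lf * (1 + LK * C)"
  have \<Gamma>0: "\<Gamma> \<ge> 0" using C Lf \<tau>1 by (simp add: \<Gamma>_def)
  have D0: "D \<ge> 0" using C Lf LK by (simp add: D_def)
  define Q where "Q = 1 + 2 * \<Gamma> * D + 8 * \<Gamma> * D * M"
  have Q1: "Q \<ge> 1" using \<Gamma>0 D0 M by (simp add: Q_def)
  define \<delta>s where "\<delta>s = 1 / Q"
  show ?thesis
  proof (intro exI[of _ \<delta>s] conjI allI impI)
    show "\<delta>s > 0" using Q1 by (simp add: \<delta>s_def)
    fix s assume H: "sampling_seq s \<and> bdd_above (range (\<lambda>k. s (Suc k) - s k)) \<and> (SUP k. s (Suc k) - s k) < \<delta>s"
    then have sp: "sampling_seq s" and bdd: "bdd_above (range (\<lambda>k. s (Suc k) - s k))"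
      and lt: "(SUP k. s (Suc k) - s k) < \<delta>s" by auto
    define \<delta> where "\<delta> = (SUP k. s (Suc k) - s k)"
    have \<delta>k: "s (Suc k) - s k \<le> \<delta>" for k unfolding \<delta>_def by (rule cSUP_upper[OF UNIV_I bdd])
    have \<delta>0: "\<delta> \<ge> 0" using \<delta>k[of 0] sp_props(6)[OF sp, of 0] by simp
    have \<delta>Q: "\<delta> * Q < 1" using lt Q1 by (simp add: \<delta>_def \<delta>s_def less_divide_eq)
    have \<delta>1: "\<delta> \<le> 1"
    proof -
      have "\<delta> * 1 \<le> \<delta> * Q" using \<delta>0 Q1 by (intro mult_left_mono) auto
      then show ?thesis using \<delta>Q by simp
    qed
    have small1: "\<Gamma> * (LK * C * Lf * (1 + LK * C) * \<delta>) \<le> 1 / 2"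
    proof -
      have "\<delta> * (2 * \<Gamma> * D) \<le> \<delta> * Q"
        using \<delta>0 \<Gamma>0 D0 M by (intro mult_left_mono) (auto simp: Q_def)
      then show ?thesis using \<delta>Q by (simp add: D_def algebra_simps)
    qed
    have small2: "8 * \<Gamma> * (LK * C * Lf * (1 + LK * C) * \<delta>) * M \<le> 1"
    proof -
      have "\<delta> * (8 * \<Gamma> * D * M) \<le> \<delta> * Q"
        using \<delta>0 \<Gamma>0 D0 M by (intro mult_left_mono) (auto simp: Q_def)
      then show ?thesis using \<delta>Q by (simp add: D_def algebra_simps)
    qed
    have main: "norm (phiS T f K s t x0 \<sigma>) \<le> 4 * M * exp (- (ln 2 / (\<tau> + 1)) * t) * norm x0"
      if t: "0 \<le> t" and \<sigma>: "\<sigma> \<in> PC" for t x0 \<sigma>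
    proof -
      obtain x where x: "sd_sol T f K s x0 \<sigma> x" using sd_exists[OF sp \<sigma>] by blast
      have "phiS T f K s t x0 \<sigma> = x t" by (rule phiS_eq[OF x sp \<sigma> t])
      moreover have "norm (x t) \<le> 4 * M * exp (- (ln 2 / (\<tau> + 1)) * t) * norm x0"
        by (rule decay[OF x sp \<sigma> UG M lam \<tau>1 \<tau>2 C(1) Cb order_refl[of \<Gamma>, unfolded \<Gamma>_def] \<delta>k \<delta>1 _ _ t])
           (use small1 small2 in \<open>simp_all add: \<Gamma>_def\<close>)
      ultimately show "norm (phiS T f K s t x0 \<sigma>) \<le> 4 * M * exp (- (ln 2 / (\<tau> + 1)) * t) * norm x0"
        by simp
    qed
    have "4 * M > 0" using M by simp
    moreover have "ln 2 / (\<tau> + 1) > 0" using \<tau>1 by simp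
    ultimately show "UGES (phiS T f K s)"
      unfolding UGES_def using main by blast
  qed
qed

end
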